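(* Let $n\ge3$, $\gamma<1$ real, and $z_1,\dots,z_n\in\mathbb{C}$ not all zero with $\frac{\gamma}{n}\big(\sum_\ell z_\ell\big)^2=\sum_\ell z_\ell^2$. Then for each $N$ with $3\le N\le n$ there exists a full lift of $(z_1,\dots,z_n;\gamma)$ in $\mathbb{R}^N$. Moreover, for $N=3$: suppose $$n\sum_\ell|z_\ell|^2+(\gamma-2)\Big|\sum_\ell z_\ell\Big|^2\neq0 .$$ Put $\rho=\frac12\sum_\ell|z_\ell|^2-\frac{\gamma}{2n}\big|\sum_\ell z_\ell\big|^2$, $\sigma=\gamma\rho/(1-\gamma)$, $u_1=\sum_\ell\alpha_\ell/\sqrt{n(\sigma+\rho)}$, $u_2=\sum_\ell\beta_\ell/\sqrt{n(\sigma+\rho)}$, $u_3=\sqrt{1-u_1^2-u_2^2}$, let $A$ be the $3\times n$ real matrix with rows $(\alpha_1,\dots,\alpha_n)$, $(\beta_1,\dots,\beta_n)$, $(1,\dots,1)$, and $\vec b=u_3\,(\sigma u_1,\ \sigma u_2,\ \sqrt{n(\sigma+\rho)})^t$. Then $u_3>0$, $A$ has rank $3$, and the lifts in $\mathbb{R}^3$ are exactly the matrices $W$ with rows $(\alpha_\ell)$, $(\beta_\ell)$, $\vec t^{\,t}$ where $\vec t=\pm A^t(AA^t)^{-1}\vec b$, i.e. $\vec t$ is the minimal Euclidean norm solution of $A\vec t=\pm\vec b$; in particular the lift in $\mathbb{R}^3$ is unique up to the sign $\vec t\mapsto-\vec t$.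
   Context: Write $z_\ell=\alpha_\ell+i\beta_\ell$ with $\alpha_\ell,\beta_\ell$ real. For $N\ge3$, a lift of $(z_1,\dots,z_n;\gamma)$ in $\mathbb{R}^N$ is a real $N\times n$ matrix $W=(\vec x_1|\cdots|\vec x_n)$ whose first row is $(\alpha_1,\dots,\alpha_n)$ and second row is $(\beta_1,\dots,\beta_n)$ (so $z_\ell$ is the orthogonal projection $y\mapsto y_1+iy_2$ of $\vec x_\ell$), such that for some unit vector $\vec u\in\mathbb{R}^N$ and reals $\rho>0$, $\sigma$ with $\rho+\sigma>0$ and $\gamma=\sigma/(\sigma+\rho)$: $WW^t=\rho I_N+\sigma\vec u\vec u^{\,t}$ and $\sum_\ell\vec x_\ell=\sqrt{n(\sigma+\rho)}\,\vec u$. (Equivalently, $W$ is the matrix of a configured star in $\mathbb{R}^N$ with internal vertex $0$ whose external vertices project to the $z_\ell$, with invariant $\sigma/(\sigma+\rho)=\gamma$.) The lift is full if the external vertices do not lie in a proper linear subspace, i.e. $W$ has rank $N$. *)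

theory Defs
  imports Complex_Main "Jordan_Normal_Form.DL_Rank" "Jordan_Normal_Form.Gauss_Jordan_Elimination"
begin

text \<open>Indices are 0-based: the points are z 0, ..., z (n-1); a real N x n matrix W has
  columns x_l (l < n) = the external vertices. Row 0 is the real parts, row 1 the
  imaginary parts.\<close>

definition is_lift :: "nat \<Rightarrow> (nat \<Rightarrow> complex) \<Rightarrow> real \<Rightarrow> nat \<Rightarrow> real mat \<Rightarrow> bool" where
  "is_lift n z \<gamma> N W \<longleftrightarrow>
     W \<in> carrier_mat N n \<and>
     (\<forall>l<n. W $$ (0, l) = Re (z l) \<and> W $$ (1, l) = Im (z l)) \<and>
     (\<exists>(u :: real vec) (\<rho> :: real) (\<sigma> :: real).
        u \<in> carrier_vec N \<and> u \<bullet> u = 1 \<and> \<rho> > 0 \<and> \<rho> + \<sigma> > 0 \<and>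
        \<gamma> = \<sigma> / (\<sigma> + \<rho>) \<and>
        W * W\<^sup>T = \<rho> \<cdot>\<^sub>m 1\<^sub>m N + \<sigma> \<cdot>\<^sub>m mat N N (\<lambda>(i, j). u $ i * u $ j) \<and>
        vec N (\<lambda>i. \<Sum>l<n. W $$ (i, l)) = sqrt (real n * (\<sigma> + \<rho>)) \<cdot>\<^sub>v u)"

definition is_full_lift :: "nat \<Rightarrow> (nat \<Rightarrow> complex) \<Rightarrow> real \<Rightarrow> nat \<Rightarrow> real mat \<Rightarrow> bool" where
  "is_full_lift n z \<gamma> N W \<longleftrightarrow> is_lift n z \<gamma> N W \<and> vec_space.rank N W = N"

end

theory Submission
  imports Defs
begin


lemma kernel_exists:
  fixes L :: "(nat \<Rightarrow> real) list"
  assumes "length L < n"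
  shows "\<exists>x. (\<exists>l<n. x l \<noteq> 0) \<and> (\<forall>v\<in>set L. (\<Sum>l<n. v l * x l) = 0)"
proof -
  define m where "m = length L"
  define c where "c = (\<lambda>i. vec n (\<lambda>j. if i < m then (L!i) j else 0) :: real vec)"
  define B where "B = mat\<^sub>r n n (\<lambda>i. if i = n - 1 then 0\<^sub>v n else c i)"
  have n0: "n > 0" using assms by simp
  have detB: "det B = 0" unfolding B_def
    by (rule det_row_0) (use n0 in \<open>auto simp: c_def\<close>)
  have Bc: "B \<in> carrier_mat n n" unfolding B_def by simp
  obtain v where v: "v \<in> carrier_vec n" "v \<noteq> 0\<^sub>v n" "B *\<^sub>v v = 0\<^sub>v n"
    using det_0_iff_vec_prod_zero_field[OF Bc] detB by blast
  have "\<exists>l<n. v $ l \<noteq> 0"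
  proof (rule ccontr)
    assume "\<not> ?thesis"
    then have "v = 0\<^sub>v n" using v(1) by (intro eq_vecI) auto
    with v(2) show False by simp
  qed
  moreover have "\<forall>w\<in>set L. (\<Sum>l<n. w l * v $ l) = 0"
  proof
    fix w assume "w \<in> set L"
    then obtain i where i: "i < m" "L ! i = w" unfolding m_def by (auto simp: in_set_conv_nth)
    have im: "i < n - 1" "i < n" using i assms unfolding m_def by auto
    have "(B *\<^sub>v v) $ i = 0" using v(3) im by simp
    moreover have "(B *\<^sub>v v) $ i = row B i \<bullet> v" using im Bc by simp
    moreover have "row B i = c i" using im unfolding B_def by (auto simp: c_def)
    moreover have "c i \<bullet> v = (\<Sum>l<n. w l * v $ l)"
      using v(1) i unfolding c_def scalar_prod_def by (auto simp: atLeast0LessThan)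
    ultimately show "(\<Sum>l<n. w l * v $ l) = 0" by simp
  qed
  ultimately show ?thesis by blast
qed

lemma orthonormal_exists:
  fixes L :: "(nat \<Rightarrow> real) list"
  assumes "k + length L \<le> n"
  shows "\<exists>e. (\<forall>i<k. \<forall>j<k. (\<Sum>l<n. e i l * e j l) = (if i = j then 1 else 0)) \<and>
             (\<forall>i<k. \<forall>v\<in>set L. (\<Sum>l<n. e i l * v l) = 0)"
  using assms
proof (induction k)
  case 0
  then show ?case by auto
next
  case (Suc k)
  then obtain e where e1: "\<forall>i<k. \<forall>j<k. (\<Sum>l<n. e i l * e j l) = (if i = j then 1 else 0)"
     and e2: "\<forall>i<k. \<forall>v\<in>set L. (\<Sum>l<n. e i l * v l) = 0" by auto
  have "length (L @ map e [0..<k]) < n" using Suc.prems by simp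
  from kernel_exists[OF this] obtain x where x1: "\<exists>l<n. x l \<noteq> 0"
    and x2: "\<forall>v\<in>set (L @ map e [0..<k]). (\<Sum>l<n. v l * x l) = 0" by blast
  define nx where "nx = (\<Sum>l<n. x l * x l)"
  have nxpos: "nx > 0"
  proof -
    from x1 obtain l0 where l0: "l0 < n" "x l0 \<noteq> 0" by blast
    have "x l0 * x l0 \<le> nx" unfolding nx_def
      by (rule member_le_sum) (use l0 in auto)
    moreover have "x l0 * x l0 > 0" using l0 by (auto simp: zero_less_mult_iff)
    ultimately show ?thesis by simp
  qed
  define e' where "e' = e(k := (\<lambda>l. x l / sqrt nx))"
  have xe: "(\<Sum>l<n. e i l * x l) = 0" if "i < k" for i
  proof -
    have "e i \<in> set (L @ map e [0..<k])" using that by auto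
    with x2 show ?thesis by auto
  qed
  have xv: "(\<Sum>l<n. x l * v l) = 0" if "v \<in> set L" for v
  proof -
    have "(\<Sum>l<n. v l * x l) = 0" using x2 that by auto
    then show ?thesis by (simp add: mult.commute)
  qed
  have nn: "(\<Sum>l<n. x l / sqrt nx * (x l / sqrt nx)) = 1"
  proof -
    have "(\<Sum>l<n. x l / sqrt nx * (x l / sqrt nx)) = (\<Sum>l<n. x l * x l) / (sqrt nx * sqrt nx)"
      by (simp add: sum_divide_distrib)
    also have "\<dots> = 1" using nxpos unfolding nx_def[symmetric] by simp
    finally show ?thesis .
  qed
  show ?case
  proof (intro exI[of _ e'] conjI allI impI ballI)
    fix i j assume ij: "i < Suc k" "j < Suc k"
    show "(\<Sum>l<n. e' i l * e' j l) = (if i = j then 1 else 0)"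
    proof (cases "i = k"; cases "j = k")
      assume "i = k" "j = k" then show ?thesis using nn by (simp add: e'_def)
    next
      assume a: "i = k" "j \<noteq> k"
      then have "j < k" using ij by simp
      have "(\<Sum>l<n. x l / sqrt nx * e j l) = (\<Sum>l<n. e j l * x l) / sqrt nx"
        by (simp add: sum_divide_distrib mult.commute)
      then show ?thesis using a xe[OF \<open>j<k\<close>] by (simp add: e'_def)
    next
      assume a: "i \<noteq> k" "j = k"
      then have "i < k" using ij by simp
      have "(\<Sum>l<n. e i l * (x l / sqrt nx)) = (\<Sum>l<n. e i l * x l) / sqrt nx"
        by (simp add: sum_divide_distrib)
      then show ?thesis using a xe[OF \<open>i<k\<close>] by (simp add: e'_def)
    next
      assume a: "i \<noteq> k" "j \<noteq> k"
      then show ?thesis using e1 ij by (simp add: e'_def)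
    qed
  next
    fix i v assume iv: "i < Suc k" "v \<in> set L"
    show "(\<Sum>l<n. e' i l * v l) = 0"
    proof (cases "i = k")
      case True
      have "(\<Sum>l<n. x l / sqrt nx * v l) = (\<Sum>l<n. x l * v l) / sqrt nx"
        by (simp add: sum_divide_distrib)
      then show ?thesis using True xv[OF iv(2)] by (simp add: e'_def)
    next
      case False
      then show ?thesis using e2 iv by (simp add: e'_def)
    qed
  qed
qed


lemma lift_intro:
  fixes R :: "nat \<Rightarrow> nat \<Rightarrow> real" and uf :: "nat \<Rightarrow> real"
  assumes N2: "2 \<le> N"
    and R0: "\<forall>l<n. R 0 l = Re (z l)" and R1: "\<forall>l<n. R 1 l = Im (z l)"
    and uu: "(\<Sum>i<N. uf i * uf i) = 1"
    and pos: "\<rho> > 0" "\<rho> + \<sigma> > 0" and g: "\<gamma> = \<sigma> / (\<sigma> + \<rho>)"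
    and G: "\<forall>i<N. \<forall>j<N. (\<Sum>l<n. R i l * R j l) = (if i = j then \<rho> else 0) + \<sigma> * uf i * uf j"
    and S: "\<forall>i<N. (\<Sum>l<n. R i l) = sqrt (real n * (\<sigma> + \<rho>)) * uf i"
  shows "is_lift n z \<gamma> N (mat N n (\<lambda>(i,l). R i l))"
proof -
  let ?W = "mat N n (\<lambda>(i,l). R i l)"
  have c1: "?W \<in> carrier_mat N n" by simp
  have c2: "\<forall>l<n. ?W $$ (0, l) = Re (z l) \<and> ?W $$ (1, l) = Im (z l)"
    using N2 R0 R1 by simp
  have c3: "vec N uf \<in> carrier_vec N" by simp
  have c4: "vec N uf \<bullet> vec N uf = 1" using uu by (simp add: scalar_prod_def atLeast0LessThan)
  have c5: "?W * ?W\<^sup>T = \<rho> \<cdot>\<^sub>m 1\<^sub>m N + \<sigma> \<cdot>\<^sub>m mat N N (\<lambda>(i, j). vec N uf $ i * vec N uf $ j)"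
  proof (rule eq_matI)
    fix i j assume ij: "i < dim_row (\<rho> \<cdot>\<^sub>m 1\<^sub>m N + \<sigma> \<cdot>\<^sub>m mat N N (\<lambda>(i, j). vec N uf $ i * vec N uf $ j))"
        "j < dim_col (\<rho> \<cdot>\<^sub>m 1\<^sub>m N + \<sigma> \<cdot>\<^sub>m mat N N (\<lambda>(i, j). vec N uf $ i * vec N uf $ j))"
    then have ij': "i < N" "j < N" by auto
    have "(?W * ?W\<^sup>T) $$ (i, j) = (\<Sum>l<n. R i l * R j l)"
      using ij' by (simp add: scalar_prod_def atLeast0LessThan)
    also have "\<dots> = (if i = j then \<rho> else 0) + \<sigma> * uf i * uf j" using G ij' by blast
    finally show "(?W * ?W\<^sup>T) $$ (i, j) = (\<rho> \<cdot>\<^sub>m 1\<^sub>m N + \<sigma> \<cdot>\<^sub>m mat N N (\<lambda>(i, j). vec N uf $ i * vec N uf $ j)) $$ (i, j)"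
      using ij' by simp
  qed auto
  have c6: "vec N (\<lambda>i. \<Sum>l<n. ?W $$ (i, l)) = sqrt (real n * (\<sigma> + \<rho>)) \<cdot>\<^sub>v vec N uf"
    using S by (intro eq_vecI) auto
  show ?thesis unfolding is_lift_def using c1 c2 c3 c4 c5 c6 pos g by blast
qed

lemma lift_elim:
  assumes "is_lift n z \<gamma> N W" and N2: "2 \<le> N"
  obtains uf \<rho> \<sigma> where "W = mat N n (\<lambda>(i,l). W $$ (i,l))"
    "\<forall>l<n. W $$ (0, l) = Re (z l)" "\<forall>l<n. W $$ (1, l) = Im (z l)"
    "(\<Sum>i<N. uf i * uf i) = 1" "\<rho> > 0" "\<rho> + \<sigma> > 0" "\<gamma> = \<sigma> / (\<sigma> + \<rho>)"
    "\<forall>i<N. \<forall>j<N. (\<Sum>l<n. W $$ (i,l) * W $$ (j,l)) = (if i = j then \<rho> else 0) + \<sigma> * uf i * uf j"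
    "\<forall>i<N. (\<Sum>l<n. W $$ (i,l)) = sqrt (real n * (\<sigma> + \<rho>)) * uf i"
proof -
  from assms(1) obtain u \<rho> \<sigma> where W: "W \<in> carrier_mat N n"
    and z: "\<forall>l<n. W $$ (0, l) = Re (z l) \<and> W $$ (1, l) = Im (z l)"
    and u: "u \<in> carrier_vec N" "u \<bullet> u = 1" and p: "\<rho> > 0" "\<rho> + \<sigma> > 0" "\<gamma> = \<sigma> / (\<sigma> + \<rho>)"
    and G: "W * W\<^sup>T = \<rho> \<cdot>\<^sub>m 1\<^sub>m N + \<sigma> \<cdot>\<^sub>m mat N N (\<lambda>(i, j). u $ i * u $ j)"
    and S: "vec N (\<lambda>i. \<Sum>l<n. W $$ (i, l)) = sqrt (real n * (\<sigma> + \<rho>)) \<cdot>\<^sub>v u"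
    unfolding is_lift_def by blast
  show ?thesis
  proof (rule that[of "\<lambda>i. u $ i" \<rho> \<sigma>])
    show "W = mat N n (\<lambda>(i,l). W $$ (i,l))" using W by (intro eq_matI) auto
    show "\<forall>l<n. W $$ (0, l) = Re (z l)" "\<forall>l<n. W $$ (1, l) = Im (z l)" using z by auto
    show "(\<Sum>i<N. u $ i * u $ i) = 1" using u by (simp add: scalar_prod_def atLeast0LessThan)
    show "\<rho> > 0" "\<rho> + \<sigma> > 0" "\<gamma> = \<sigma> / (\<sigma> + \<rho>)" using p by auto
    show "\<forall>i<N. \<forall>j<N. (\<Sum>l<n. W $$ (i,l) * W $$ (j,l)) = (if i = j then \<rho> else 0) + \<sigma> * u $ i * u $ j"
    proof (intro allI impI)
      fix i j assume ij: "i < N" "j < N"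
      have "(W * W\<^sup>T) $$ (i, j) = (\<Sum>l<n. W $$ (i,l) * W $$ (j,l))"
        using ij W by (simp add: scalar_prod_def atLeast0LessThan)
      moreover have "(W * W\<^sup>T) $$ (i, j) = (if i = j then \<rho> else 0) + \<sigma> * u $ i * u $ j"
        unfolding G using ij u by simp
      ultimately show "(\<Sum>l<n. W $$ (i,l) * W $$ (j,l)) = (if i = j then \<rho> else 0) + \<sigma> * u $ i * u $ j"
        by simp
    qed
    show "\<forall>i<N. (\<Sum>l<n. W $$ (i,l)) = sqrt (real n * (\<sigma> + \<rho>)) * u $ i"
    proof (intro allI impI)
      fix i assume i: "i < N"
      have "vec N (\<lambda>i. \<Sum>l<n. W $$ (i, l)) $ i = (sqrt (real n * (\<sigma> + \<rho>)) \<cdot>\<^sub>v u) $ i" using S by simp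
      then show "(\<Sum>l<n. W $$ (i,l)) = sqrt (real n * (\<sigma> + \<rho>)) * u $ i" using i u by simp
    qed
  qed
qed


lemma lift_full_rank:
  assumes "is_lift n z \<gamma> N W"
  shows "vec_space.rank N W = N"
proof -
  from assms obtain u \<rho> \<sigma> where W: "W \<in> carrier_mat N n"
    and u: "u \<in> carrier_vec N" "u \<bullet> u = 1" and p: "\<rho> > 0" "\<rho> + \<sigma> > 0"
    and G: "W * W\<^sup>T = \<rho> \<cdot>\<^sub>m 1\<^sub>m N + \<sigma> \<cdot>\<^sub>m mat N N (\<lambda>(i, j). u $ i * u $ j)"
    unfolding is_lift_def by blast
  interpret vec_space "TYPE(real)" N .
  have surj: "\<exists>x\<in>carrier_vec n. W *\<^sub>v x = y" if y: "y \<in> carrier_vec N" for y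
  proof -
    define a where "a = u \<bullet> y"
    define k where "k = \<sigma> * a / (\<rho> + \<sigma>)"
    define zz where "zz = vec N (\<lambda>j. (y $ j - k * u $ j) / \<rho>)"
    have zz: "zz \<in> carrier_vec N" unfolding zz_def by simp
    have uzz: "(\<Sum>j<N. u $ j * zz $ j) = (a - k) / \<rho>"
    proof -
      have "(\<Sum>j<N. u $ j * zz $ j) = (\<Sum>j<N. (u $ j * y $ j - k * (u $ j * u $ j)) / \<rho>)"
        unfolding zz_def by (intro sum.cong) (auto simp: algebra_simps)
      also have "\<dots> = ((\<Sum>j<N. u $ j * y $ j) - k * (\<Sum>j<N. u $ j * u $ j)) / \<rho>"
        by (simp add: sum_divide_distrib[symmetric] sum_subtractf sum_distrib_left)
      also have "(\<Sum>j<N. u $ j * y $ j) = a" unfolding a_def scalar_prod_def using y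
        by (simp add: atLeast0LessThan)
      also have "(\<Sum>j<N. u $ j * u $ j) = 1" using u unfolding scalar_prod_def
        by (simp add: atLeast0LessThan)
      finally show ?thesis by simp
    qed
    have "W *\<^sub>v (W\<^sup>T *\<^sub>v zz) = y"
    proof -
      have "W *\<^sub>v (W\<^sup>T *\<^sub>v zz) = (W * W\<^sup>T) *\<^sub>v zz"
        using W zz by (simp add: assoc_mult_mat_vec)
      also have "\<dots> = y"
      proof (rule eq_vecI)
        fix i assume "i < dim_vec y"
        then have i: "i < N" using y by simp
        have "((W * W\<^sup>T) *\<^sub>v zz) $ i = (\<Sum>j<N. (\<rho> * (if i = j then 1 else 0) + \<sigma> * (u $ i * u $ j)) * zz $ j)"
          unfolding G using i zz by (auto simp: scalar_prod_def atLeast0LessThan intro!: sum.cong)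
        also have "\<dots> = (\<Sum>j<N. \<rho> * (if i = j then zz $ j else 0) + \<sigma> * u $ i * (u $ j * zz $ j))"
          by (intro sum.cong) (auto simp: algebra_simps)
        also have "\<dots> = (\<Sum>j<N. \<rho> * (if i = j then zz $ j else 0)) + \<sigma> * u $ i * (\<Sum>j<N. u $ j * zz $ j)"
          by (simp add: sum.distrib sum_distrib_left)
        also have "(\<Sum>j<N. \<rho> * (if i = j then zz $ j else 0)) = \<rho> * zz $ i"
          using i by (simp add: sum_distrib_left[symmetric])
        also have "\<rho> * zz $ i + \<sigma> * u $ i * (\<Sum>j<N. u $ j * zz $ j) = y $ i"
        proof -
          have r1: "\<rho> \<noteq> 0" "\<rho> + \<sigma> \<noteq> 0" using p by auto
          have h2: "\<rho> * zz $ i = y $ i - k * u $ i"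
            using i r1 unfolding zz_def by simp
          have h1: "\<sigma> * u $ i * ((a - k) / \<rho>) = k * u $ i"
          proof -
            have "a - k = a * \<rho> / (\<rho> + \<sigma>)" unfolding k_def using r1
              by (simp add: field_simps)
            then show ?thesis unfolding k_def using r1 by simp
          qed
          have "\<rho> * zz $ i + \<sigma> * u $ i * ((a - k) / \<rho>) = (y $ i - k * u $ i) + k * u $ i"
            by (simp only: h1 h2)
          then show ?thesis unfolding uzz by simp
        qed
        finally show "((W * W\<^sup>T) *\<^sub>v zz) $ i = y $ i" .
      qed (use W y in simp)
      finally show ?thesis .
    qed
    moreover have "W\<^sup>T *\<^sub>v zz \<in> carrier_vec n" using W zz by (intro mult_mat_vec_carrier) auto
    ultimately show ?thesis by blast
  qed
  have cW: "col_space W = carrier_vec N"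
    unfolding col_space_eq[OF W] using W surj by auto
  have one: "(1\<^sub>m N :: real mat) \<in> carrier_mat N N" by simp
  have c1: "col_space (1\<^sub>m N :: real mat) = carrier_vec N"
    unfolding col_space_eq[OF one] by (auto intro!: bexI[of _ "y" for y])
  have "rank W = rank (1\<^sub>m N :: real mat)"
    unfolding rank_def using cW c1 unfolding col_space_def by simp
  also have "\<dots> = N" using det_rank_iff[OF one] by simp
  finally show ?thesis .
qed


definition ip :: "nat \<Rightarrow> (nat \<Rightarrow> real) \<Rightarrow> (nat \<Rightarrow> real) \<Rightarrow> real" where
  "ip n f g = (\<Sum>l<n. f l * g l)"

lemma ip_comm: "ip n f g = ip n g f"
  unfolding ip_def by (simp add: mult.commute)

lemma ip_lin3:
  "ip n (\<lambda>l. a * f l + b * g l + d * h l) k = a * ip n f k + b * ip n g k + d * ip n h k"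
  unfolding ip_def by (simp add: algebra_simps sum.distrib sum_distrib_left)

lemma ip_lin2:
  "ip n (\<lambda>l. a * f l + b * g l) k = a * ip n f k + b * ip n g k"
  unfolding ip_def by (simp add: algebra_simps sum.distrib sum_distrib_left)

lemma ip_one: "ip n f (\<lambda>l. 1) = (\<Sum>l<n. f l)"
  unfolding ip_def by simp

lemma ip_nonneg: "ip n f f \<ge> 0"
  unfolding ip_def by (intro sum_nonneg) simp

lemma ip_zero_imp: "ip n f f = 0 \<Longrightarrow> l < n \<Longrightarrow> f l = 0"
  unfolding ip_def
  using sum_nonneg_eq_0_iff[of "{..<n}" "\<lambda>l. f l * f l"] by auto

lemma sq_dev: "(\<Sum>l<n. (f l - m)^2) = (\<Sum>l<n. f l * f l) - 2 * m * (\<Sum>l<n. f l) + real n * m^2"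
  by (simp add: power2_eq_square algebra_simps sum.distrib sum_subtractf sum_distrib_left)

lemma cauchy_schwarz_sum: "(\<Sum>l<n. f l)^2 \<le> real n * (\<Sum>l<n. f l * f l)"
proof (cases "n = 0")
  case True then show ?thesis by simp
next
  case False
  let ?m = "(\<Sum>l<n. f l) / real n"
  have "0 \<le> (\<Sum>l<n. (f l - ?m)^2)" by (intro sum_nonneg) simp
  also have "\<dots> = (\<Sum>l<n. f l * f l) - (\<Sum>l<n. f l)^2 / real n"
    unfolding sq_dev using False by (simp add: power2_eq_square field_simps)
  finally show ?thesis using False by (simp add: field_simps)
qed

locale ctx =
  fixes n :: nat and \<gamma> :: real and z :: "nat \<Rightarrow> complex" and \<rho> \<sigma> :: real
  assumes n3: "n \<ge> 3"
    and g1: "\<gamma> < 1"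
    and nz: "\<exists>l<n. z l \<noteq> 0"
    and rel: "complex_of_real (\<gamma> / real n) * (\<Sum>l<n. z l)\<^sup>2 = (\<Sum>l<n. (z l)\<^sup>2)"
    and rho_def: "\<rho> = (1/2) * (\<Sum>l<n. (cmod (z l))\<^sup>2) - \<gamma> / (2 * real n) * (cmod (\<Sum>l<n. z l))\<^sup>2"
    and sigma_def: "\<sigma> = \<gamma> * \<rho> / (1 - \<gamma>)"
begin

definition "al = (\<lambda>l. Re (z l))"
definition "be = (\<lambda>l. Im (z l))"
definition "onev = (\<lambda>l::nat. 1::real)"
definition "Sa = (\<Sum>l<n. Re (z l))"
definition "Sb = (\<Sum>l<n. Im (z l))"
definition "Pa = ip n al al"
definition "Pb = ip n be be"
definition "Q = ip n al be"
definition "cc = sqrt (real n * (\<sigma> + \<rho>))"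
definition "u1 = Sa / cc"
definition "u2 = Sb / cc"
definition "ss = u1\<^sup>2 + u2\<^sup>2"

lemma npos: "real n > 0" using n3 by simp

lemma Sa_ip: "ip n al onev = Sa" and Sb_ip: "ip n be onev = Sb" and one_one: "ip n onev onev = real n"
  unfolding ip_def al_def be_def onev_def Sa_def Sb_def by simp_all

lemma rel_re: "Pa - Pb = \<gamma> / real n * (Sa\<^sup>2 - Sb\<^sup>2)"
proof -
  have "Re (complex_of_real (\<gamma> / real n) * (\<Sum>l<n. z l)\<^sup>2) = Re (\<Sum>l<n. (z l)\<^sup>2)" using rel by simp
  then show ?thesis
    unfolding Pa_def Pb_def ip_def al_def be_def Sa_def Sb_def
    by (simp add: Re_power2 Re_sum Im_sum sum_subtractf power2_eq_square)
qed

lemma rel_im: "Q = \<gamma> / real n * (Sa * Sb)"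
proof -
  have e1: "Im ((\<Sum>l<n. z l)^2) = 2 * Sa * Sb" unfolding Im_power2 Sa_def Sb_def
    by (simp add: Re_sum Im_sum)
  have e2: "Im (\<Sum>l<n. (z l)^2) = 2 * Q" unfolding Q_def ip_def al_def be_def
    by (simp add: Im_power2 sum_distrib_left mult.assoc)
  have e3: "Im (complex_of_real (\<gamma> / real n) * (\<Sum>l<n. z l)\<^sup>2) = \<gamma> / real n * Im ((\<Sum>l<n. z l)^2)"
    by simp
  have "\<gamma> / real n * (2 * Sa * Sb) = \<gamma> / real n * Im ((\<Sum>l<n. z l)^2)" using e1 by simp
  also have "\<dots> = Im (complex_of_real (\<gamma> / real n) * (\<Sum>l<n. z l)\<^sup>2)" using e3 by simp
  also have "\<dots> = Im (\<Sum>l<n. (z l)^2)" using rel by (rule arg_cong)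
  also have "\<dots> = 2 * Q" by (rule e2)
  finally have "\<gamma> / real n * (2 * Sa * Sb) = 2 * Q" .
  then show ?thesis using npos by (simp add: field_simps)
qed

lemma rho_eq: "\<rho> = (Pa + Pb) / 2 - \<gamma> / (2 * real n) * (Sa\<^sup>2 + Sb\<^sup>2)"
  unfolding rho_def cmod_power2 Pa_def Pb_def ip_def al_def be_def Sa_def Sb_def
  by (simp add: Re_sum Im_sum sum.distrib power2_eq_square)

lemma Pa_eq: "Pa - \<gamma> * Sa\<^sup>2 / real n = \<rho>"
  using rel_re rho_eq npos by (simp add: field_simps)

lemma Pb_eq: "Pb - \<gamma> * Sb\<^sup>2 / real n = \<rho>"
  using rel_re rho_eq npos by (simp add: field_simps)

lemma PaPb_pos: "Pa + Pb > 0"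
proof -
  from nz obtain l0 where l0: "l0 < n" "z l0 \<noteq> 0" by blast
  have t: "al l0 * al l0 + be l0 * be l0 > 0"
    using l0(2) unfolding al_def be_def
    by (metis complex.expand sum_squares_gt_zero_iff zero_complex.sel(1) zero_complex.sel(2))
  have "Pa + Pb = (\<Sum>l<n. al l * al l + be l * be l)"
    unfolding Pa_def Pb_def ip_def by (simp add: sum.distrib)
  also have "\<dots> \<ge> al l0 * al l0 + be l0 * be l0"
    by (rule member_le_sum) (use l0 in auto)
  finally show ?thesis using t by simp
qed

lemma CSa: "Sa\<^sup>2 \<le> real n * Pa"
  using cauchy_schwarz_sum[where n=n and f=al] unfolding Pa_def ip_def Sa_def al_def by simp
lemma CSb: "Sb\<^sup>2 \<le> real n * Pb"
  using cauchy_schwarz_sum[where n=n and f=be] unfolding Pb_def ip_def Sb_def be_def by simp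

lemma rho_pos: "\<rho> > 0"
proof (cases "\<gamma> \<le> 0")
  case True
  have "\<gamma> * Sa\<^sup>2 / real n \<le> 0" "\<gamma> * Sb\<^sup>2 / real n \<le> 0"
    using True npos by (auto intro!: divide_nonpos_pos mult_nonpos_nonneg)
  then show ?thesis using Pa_eq Pb_eq PaPb_pos by linarith
next
  case False
  have "\<gamma> * Sa\<^sup>2 / real n \<le> \<gamma> * Pa"
    using CSa False npos by (simp add: field_simps)
  moreover have "\<gamma> * Sb\<^sup>2 / real n \<le> \<gamma> * Pb"
    using CSb False npos by (simp add: field_simps)
  moreover have "(1 - \<gamma>) * (Pa + Pb) > 0" using g1 PaPb_pos by simp
  ultimately show ?thesis using Pa_eq Pb_eq by (simp add: algebra_simps)
qed

lemma sr_eq: "\<sigma> + \<rho> = \<rho> / (1 - \<gamma>)"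
  unfolding sigma_def using g1 by (simp add: field_simps)

lemma sr_pos: "\<sigma> + \<rho> > 0"
  unfolding sr_eq using rho_pos g1 by simp

lemma gam: "\<gamma> = \<sigma> / (\<sigma> + \<rho>)"
  unfolding sr_eq sigma_def using g1 rho_pos by (simp add: field_simps)

lemma cc_pos: "cc > 0"
  unfolding cc_def using sr_pos npos by simp

lemma cc_sq: "cc\<^sup>2 = real n * (\<sigma> + \<rho>)"
  unfolding cc_def using sr_pos npos by simp

lemma Sa_u1: "Sa = cc * u1" and Sb_u2: "Sb = cc * u2"
  unfolding u1_def u2_def using cc_pos by simp_all

lemma sig_u1: "\<sigma> * u1\<^sup>2 = \<gamma> * Sa\<^sup>2 / real n"
proof -
  have "\<sigma> * u1\<^sup>2 = \<sigma> * Sa\<^sup>2 / cc\<^sup>2" unfolding u1_def by (simp add: power_divide)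
  also have "\<dots> = \<sigma> / (\<sigma> + \<rho>) * Sa\<^sup>2 / real n" unfolding cc_sq using npos sr_pos by simp
  finally show ?thesis using gam by simp
qed

lemma sig_u2: "\<sigma> * u2\<^sup>2 = \<gamma> * Sb\<^sup>2 / real n"
proof -
  have "\<sigma> * u2\<^sup>2 = \<sigma> * Sb\<^sup>2 / cc\<^sup>2" unfolding u2_def by (simp add: power_divide)
  also have "\<dots> = \<sigma> / (\<sigma> + \<rho>) * Sb\<^sup>2 / real n" unfolding cc_sq using npos sr_pos by simp
  finally show ?thesis using gam by simp
qed

lemma sig_u12: "\<sigma> * u1 * u2 = \<gamma> * Sa * Sb / real n"
proof -
  have "\<sigma> * u1 * u2 = \<sigma> * Sa * Sb / cc\<^sup>2" unfolding u1_def u2_def by (simp add: power2_eq_square)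
  also have "\<dots> = \<sigma> / (\<sigma> + \<rho>) * Sa * Sb / real n" unfolding cc_sq using npos sr_pos by simp
  finally show ?thesis using gam by simp
qed

lemma G_Pa: "Pa = \<rho> + \<sigma> * u1\<^sup>2" using Pa_eq sig_u1 by simp
lemma G_Pb: "Pb = \<rho> + \<sigma> * u2\<^sup>2" using Pb_eq sig_u2 by simp
lemma G_Q: "Q = \<sigma> * u1 * u2" using rel_im sig_u12 by simp

lemma ccn: "cc * cc / real n = \<sigma> + \<rho>"
  using cc_sq npos by (simp add: power2_eq_square)

end

lemma alg_wv: "(u1::real) * (u1 * (r + g * u1\<^sup>2) + u2 * (g * u1 * u2) + (- kk) * (cc * u1)) +
     u2 * (u1 * (g * u1 * u2) + u2 * (r + g * u2\<^sup>2) + (- kk) * (cc * u2)) +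
     (- kk) * (u1 * (cc * u1) + u2 * (cc * u2) + (- kk) * m) =
     r * (u1\<^sup>2 + u2\<^sup>2) + g * (u1\<^sup>2 + u2\<^sup>2) * (u1\<^sup>2 + u2\<^sup>2) - 2 * kk * cc * (u1\<^sup>2 + u2\<^sup>2) + kk * kk * m"
  unfolding power2_eq_square by (simp add: ring_distribs mult.assoc mult.commute mult.left_commute)

context ctx begin
definition "kk = cc * ss / real n"
definition "wv = (\<lambda>l. u1 * al l + u2 * be l + (- kk) * onev l)"

lemma ip_al_al: "ip n al al = \<rho> + \<sigma> * u1\<^sup>2" using G_Pa Pa_def by simp
lemma ip_be_be: "ip n be be = \<rho> + \<sigma> * u2\<^sup>2" using G_Pb Pb_def by simp
lemma ip_al_be: "ip n al be = \<sigma> * u1 * u2" using G_Q Q_def by simp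
lemma ip_be_al: "ip n be al = \<sigma> * u1 * u2" using ip_al_be ip_comm by metis
lemma ip_al_one: "ip n al onev = cc * u1" using Sa_ip Sa_u1 by simp
lemma ip_be_one: "ip n be onev = cc * u2" using Sb_ip Sb_u2 by simp
lemma ip_one_al: "ip n onev al = cc * u1" using ip_al_one ip_comm by metis
lemma ip_one_be: "ip n onev be = cc * u2" using ip_be_one ip_comm by metis

lemmas ip_basic = ip_al_al ip_be_be ip_al_be ip_be_al ip_al_one ip_be_one ip_one_al ip_one_be one_one

lemma ip_wv: "ip n wv wv = \<rho> * ss * (1 - ss)"
proof -
  have h0: "ip n wv wv = u1 * ip n al wv + u2 * ip n be wv + (- kk) * ip n onev wv"
    unfolding wv_def by (rule ip_lin3)
  have h1: "ip n al wv = u1 * ip n al al + u2 * ip n be al + (-kk) * ip n onev al"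
    by (subst ip_comm, unfold wv_def, rule ip_lin3)
  have h2: "ip n be wv = u1 * ip n al be + u2 * ip n be be + (-kk) * ip n onev be"
    by (subst ip_comm, unfold wv_def, rule ip_lin3)
  have h3: "ip n onev wv = u1 * ip n al onev + u2 * ip n be onev + (-kk) * ip n onev onev"
    by (subst ip_comm, unfold wv_def, rule ip_lin3)
  have "ip n wv wv = u1 * (u1 * (\<rho> + \<sigma> * u1\<^sup>2) + u2 * (\<sigma> * u1 * u2) + (-kk) * (cc * u1))
     + u2 * (u1 * (\<sigma> * u1 * u2) + u2 * (\<rho> + \<sigma> * u2\<^sup>2) + (-kk) * (cc * u2))
     + (-kk) * (u1 * (cc * u1) + u2 * (cc * u2) + (-kk) * real n)"
    unfolding h0 h1 h2 h3 ip_basic ..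
  also have "\<dots> = \<rho> * ss + \<sigma> * ss * ss - 2 * kk * cc * ss + kk * kk * real n"
    unfolding ss_def by (rule alg_wv)
  also have "kk * kk * real n = cc * cc / real n * ss * ss" unfolding kk_def using npos
    by (simp add: field_simps)
  also have "2 * kk * cc * ss = 2 * (cc * cc / real n) * ss * ss" unfolding kk_def using npos
    by (simp add: field_simps)
  finally show ?thesis unfolding ccn by (simp add: algebra_simps)
qed

lemma ss_nonneg: "ss \<ge> 0" unfolding ss_def by simp

lemma ss_le1: "ss \<le> 1"
proof (cases "ss = 0")
  case True then show ?thesis by simp
next
  case False
  then have "\<rho> * ss > 0" using ss_nonneg rho_pos by simp
  moreover have "\<rho> * ss * (1 - ss) \<ge> 0" using ip_wv ip_nonneg by metis
  ultimately show ?thesis by (simp add: zero_le_mult_iff)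
qed

lemma expr_eq: "real n * (\<Sum>l<n. (cmod (z l))\<^sup>2) + (\<gamma> - 2) * (cmod (\<Sum>l<n. z l))\<^sup>2
   = 2 * real n * \<rho> * (1 - ss)"
proof -
  have e1: "(\<Sum>l<n. (cmod (z l))\<^sup>2) = Pa + Pb"
    unfolding cmod_power2 Pa_def Pb_def ip_def al_def be_def
    by (simp add: sum.distrib power2_eq_square)
  have e2: "(cmod (\<Sum>l<n. z l))\<^sup>2 = Sa\<^sup>2 + Sb\<^sup>2"
    unfolding cmod_power2 Sa_def Sb_def by (simp add: Re_sum Im_sum)
  have e3: "ss = (1 - \<gamma>) * (Sa\<^sup>2 + Sb\<^sup>2) / (real n * \<rho>)"
  proof -
    have "ss = (Sa\<^sup>2 + Sb\<^sup>2) / cc\<^sup>2" unfolding ss_def u1_def u2_def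
      by (simp add: power_divide add_divide_distrib)
    also have "\<dots> = (Sa\<^sup>2 + Sb\<^sup>2) / (real n * (\<rho> / (1 - \<gamma>)))" unfolding cc_sq sr_eq ..
    finally show ?thesis using g1 by (simp add: field_simps)
  qed
  have e4: "2 * real n * \<rho> = real n * (Pa + Pb) - \<gamma> * (Sa\<^sup>2 + Sb\<^sup>2)"
    unfolding rho_eq using npos by (simp add: field_simps)
  have "2 * real n * \<rho> * (1 - ss) = 2 * real n * \<rho> - 2 * (1 - \<gamma>) * (Sa\<^sup>2 + Sb\<^sup>2)"
    unfolding e3 using npos rho_pos by (simp add: field_simps)
  then show ?thesis unfolding e1 e2 using e4 by (simp add: algebra_simps)
qed

end


lemma alg_t1a:
  fixes u1 u2 u3 \<rho> \<sigma> :: real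
  assumes "u3 > 0" "u3 * u3 = 1 - u1 * u1 - u2 * u2"
  shows "-u1/u3*(\<rho>+\<sigma>*u1\<^sup>2) + -u2/u3*(\<sigma>*u1*u2) + (\<sigma>+\<rho>)*u1/u3 = \<sigma>*u1*u3"
proof -
  have "-u1/u3*(\<rho>+\<sigma>*u1\<^sup>2) + -u2/u3*(\<sigma>*u1*u2) + (\<sigma>+\<rho>)*u1/u3
      = (\<sigma>*u1*(1 - u1 * u1 - u2 * u2)) / u3"
    using assms(1) by (simp add: field_simps power2_eq_square ring_distribs)
  also have "\<dots> = \<sigma>*u1*(u3*u3) / u3" using assms(2) by simp
  also have "\<dots> = \<sigma>*u1*u3" using assms(1) by simp
  finally show ?thesis .
qed

lemma alg_t1b:
  fixes u1 u2 u3 \<rho> \<sigma> :: real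
  assumes "u3 > 0" "u3 * u3 = 1 - u1 * u1 - u2 * u2"
  shows "-u1/u3*(\<sigma>*u1*u2) + -u2/u3*(\<rho>+\<sigma>*u2\<^sup>2) + (\<sigma>+\<rho>)*u2/u3 = \<sigma>*u2*u3"
proof -
  have "-u1/u3*(\<sigma>*u1*u2) + -u2/u3*(\<rho>+\<sigma>*u2\<^sup>2) + (\<sigma>+\<rho>)*u2/u3
      = (\<sigma>*u2*(1 - u1 * u1 - u2 * u2)) / u3"
    using assms(1) by (simp add: field_simps power2_eq_square ring_distribs)
  also have "\<dots> = \<sigma>*u2*(u3*u3) / u3" using assms(2) by simp
  also have "\<dots> = \<sigma>*u2*u3" using assms(1) by simp
  finally show ?thesis .
qed

lemma alg_t1c:
  fixes u1 u2 u3 cc m :: real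
  assumes "u3 > 0" "u3 * u3 = 1 - u1 * u1 - u2 * u2" "m > 0"
  shows "-u1/u3*(cc*u1) + -u2/u3*(cc*u2) + cc/(m*u3)*m = cc*u3"
proof -
  have "-u1/u3*(cc*u1) + -u2/u3*(cc*u2) + cc/(m*u3)*m = cc*(1 - u1 * u1 - u2 * u2) / u3"
    using assms(1,3) by (simp add: field_simps power2_eq_square ring_distribs)
  also have "\<dots> = cc*(u3*u3) / u3" using assms(2) by simp
  also have "\<dots> = cc*u3" using assms(1) by simp
  finally show ?thesis .
qed

lemma alg_t1d:
  fixes u1 u2 u3 cc m \<rho> \<sigma> :: real
  assumes "u3 > 0" "u3 * u3 = 1 - u1 * u1 - u2 * u2" "m > 0" "cc * cc / m = \<sigma> + \<rho>"
  shows "-u1/u3*(\<sigma>*u1*u3) + -u2/u3*(\<sigma>*u2*u3) + cc/(m*u3)*(cc*u3) = \<rho> + \<sigma> * u3\<^sup>2"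
proof -
  have "-u1/u3*(\<sigma>*u1*u3) + -u2/u3*(\<sigma>*u2*u3) + cc/(m*u3)*(cc*u3) = - \<sigma> * (u1 * u1 + u2 * u2) + cc * cc / m"
    using assms(1,3) by (simp add: field_simps power2_eq_square ring_distribs)
  also have "\<dots> = - \<sigma> * (1 - u3 * u3) + (\<sigma> + \<rho>)" using assms(2,4) by simp
  also have "\<dots> = \<rho> + \<sigma> * u3\<^sup>2" by (simp add: power2_eq_square ring_distribs)
  finally show ?thesis .
qed

context ctx begin

definition "u3 = sqrt (1 - u1\<^sup>2 - u2\<^sup>2)"
definition "t1 = (\<lambda>l. (- u1 / u3) * al l + (- u2 / u3) * be l + (cc / (real n * u3)) * onev l)"

lemma u3_sq: "u3 * u3 = 1 - u1 * u1 - u2 * u2"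
  unfolding u3_def using ss_le1 unfolding ss_def by (simp add: power2_eq_square)

lemma u3_pos: "ss < 1 \<Longrightarrow> u3 > 0"
  unfolding u3_def ss_def by simp

lemma ip_al_t1: "ss < 1 \<Longrightarrow> ip n al t1 = \<sigma> * u1 * u3"
proof -
  assume a: "ss < 1"
  have "ip n al t1 = ip n t1 al" by (rule ip_comm)
  also have "\<dots> = (- u1 / u3) * ip n al al + (- u2 / u3) * ip n be al + (cc / (real n * u3)) * ip n onev al"
    unfolding t1_def by (rule ip_lin3)
  also have "(cc / (real n * u3)) * ip n onev al = (cc * cc / real n) * u1 / u3"
    unfolding ip_basic by simp
  also have "\<dots> = (\<sigma> + \<rho>) * u1 / u3" unfolding ccn ..
  finally show ?thesis unfolding ip_basic using alg_t1a[OF u3_pos[OF a] u3_sq] by simp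
qed

lemma ip_be_t1: "ss < 1 \<Longrightarrow> ip n be t1 = \<sigma> * u2 * u3"
proof -
  assume a: "ss < 1"
  have "ip n be t1 = ip n t1 be" by (rule ip_comm)
  also have "\<dots> = (- u1 / u3) * ip n al be + (- u2 / u3) * ip n be be + (cc / (real n * u3)) * ip n onev be"
    unfolding t1_def by (rule ip_lin3)
  also have "(cc / (real n * u3)) * ip n onev be = (cc * cc / real n) * u2 / u3"
    unfolding ip_basic by simp
  also have "\<dots> = (\<sigma> + \<rho>) * u2 / u3" unfolding ccn ..
  finally show ?thesis unfolding ip_basic using alg_t1b[OF u3_pos[OF a] u3_sq] by simp
qed

lemma ip_one_t1: "ss < 1 \<Longrightarrow> ip n onev t1 = cc * u3"
proof -
  assume a: "ss < 1"
  have "ip n onev t1 = ip n t1 onev" by (rule ip_comm)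
  also have "\<dots> = (- u1 / u3) * ip n al onev + (- u2 / u3) * ip n be onev + (cc / (real n * u3)) * ip n onev onev"
    unfolding t1_def by (rule ip_lin3)
  finally show ?thesis unfolding ip_basic using alg_t1c[OF u3_pos[OF a] u3_sq npos] by simp
qed

lemma ip_t1_t1: "ss < 1 \<Longrightarrow> ip n t1 t1 = \<rho> + \<sigma> * u3\<^sup>2"
proof -
  assume a: "ss < 1"
  have "ip n t1 t1 = (- u1 / u3) * ip n al t1 + (- u2 / u3) * ip n be t1 + (cc / (real n * u3)) * ip n onev t1"
    unfolding t1_def by (rule ip_lin3)
  then show ?thesis unfolding ip_al_t1[OF a] ip_be_t1[OF a] ip_one_t1[OF a]
    using alg_t1d[OF u3_pos[OF a] u3_sq npos ccn] by simp
qed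

end


lemma ip_scal: "ip n (\<lambda>l. a * f l) g = a * ip n f g"
  unfolding ip_def by (simp add: sum_distrib_left mult.assoc)

lemma ip_cong: "(\<And>l. l < n \<Longrightarrow> g l = g' l) \<Longrightarrow> ip n f g = ip n f g'"
  unfolding ip_def by (intro sum.cong) auto

lemma sum_ip: "(\<Sum>l<n. f l) = ip n f (\<lambda>l. 1)"
  unfolding ip_def by simp

lemma sum_upto3:
  assumes "3 \<le> (N::nat)" "\<And>i. 3 \<le> i \<Longrightarrow> f i = 0"
  shows "(\<Sum>i<N. f i) = f 0 + f 1 + (f 2 :: real)"
  using assms(1)
proof (induction N rule: dec_induct)
  case base
  then show ?case by (simp add: numeral_3_eq_3 numeral_2_eq_2 lessThan_Suc)
next
  case (step m)
  then show ?case using assms(2)[of m] by (simp add: lessThan_Suc)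
qed

lemma sum_upto2:
  assumes "2 \<le> (N::nat)" "\<And>i. 2 \<le> i \<Longrightarrow> f i = 0"
  shows "(\<Sum>i<N. f i) = f 0 + (f 1 :: real)"
  using assms(1)
proof (induction N rule: dec_induct)
  case base
  then show ?case by (simp add: numeral_2_eq_2 lessThan_Suc)
next
  case (step m)
  then show ?case using assms(2)[of m] by (simp add: lessThan_Suc)
qed

context ctx begin

lemma exists_lift_nondeg:
  assumes N: "3 \<le> N" "N \<le> n" and a: "ss < 1"
  shows "\<exists>W. is_lift n z \<gamma> N W"
proof -
  have len: "N - 3 + length [al, be, onev] \<le> n" using N by simp
  obtain e where e1: "\<forall>i<N-3. \<forall>j<N-3. (\<Sum>l<n. e i l * e j l) = (if i = j then 1 else 0)"
    and e2: "\<forall>i<N-3. \<forall>v\<in>set [al, be, onev]. (\<Sum>l<n. e i l * v l) = 0"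
    using orthonormal_exists[OF len] by blast
  have ee: "ip n (e i) (e j) = (if i = j then 1 else 0)" if "i < N-3" "j < N-3" for i j
    using e1 that unfolding ip_def by blast
  have ea: "ip n (e i) al = 0" "ip n (e i) be = 0" "ip n (e i) onev = 0" if "i < N-3" for i
    using e2 that unfolding ip_def by auto
  have ae: "ip n al (e i) = 0" "ip n be (e i) = 0" "ip n onev (e i) = 0" if "i < N-3" for i
    using ea[OF that] ip_comm[of n "e i" al] ip_comm[of n "e i" be] ip_comm[of n "e i" onev] by simp_all
  have et: "ip n (e i) t1 = 0" if "i < N-3" for i
    unfolding t1_def ip_comm[of n "e i"] ip_lin3 using ae[OF that] by simp
  have te: "ip n t1 (e i) = 0" if "i < N-3" for i
    using et[OF that] ip_comm[of n "e i" t1] by simp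
  have u3p: "u3 > 0" using u3_pos[OF a] .
  define R where "R = (\<lambda>i. if i = 0 then al else if i = 1 then be else if i = 2 then t1
                        else (\<lambda>l. sqrt \<rho> * e (i - 3) l))"
  define uf where "uf = (\<lambda>i::nat. if i = 0 then u1 else if i = 1 then u2 else if i = 2 then u3 else 0)"
  have rr: "sqrt \<rho> * sqrt \<rho> = \<rho>" using rho_pos by simp
  have t1al: "ip n t1 al = \<sigma> * u1 * u3" "ip n t1 be = \<sigma> * u2 * u3"
    using ip_al_t1[OF a] ip_be_t1[OF a] ip_comm[of n t1 al] ip_comm[of n t1 be] by simp_all
  have cs: "i = 0 \<or> i = 1 \<or> i = 2 \<or> (3 \<le> i \<and> i - 3 < N - 3)" if "i < N" for i
    using that by auto
  have Rhi: "R i = (\<lambda>l. sqrt \<rho> * e (i - 3) l)" "uf i = 0" if "3 \<le> i" for i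
    using that unfolding R_def uf_def by auto
  have c_al: "ip n (R i) al = (if i = 0 then \<rho> else 0) + \<sigma> * uf i * u1" if "i < N" for i
    using cs[OF that]
  proof (elim disjE conjE)
    assume "i = 0" then show ?thesis by (simp add: R_def uf_def ip_al_al power2_eq_square)
  next
    assume "i = 1" then show ?thesis by (simp add: R_def uf_def ip_be_al)
  next
    assume "i = 2" then show ?thesis by (simp add: R_def uf_def t1al)
  next
    assume h: "3 \<le> i" "i - 3 < N - 3" then show ?thesis by (simp add: Rhi ip_scal ea)
  qed
  have c_be: "ip n (R i) be = (if i = 1 then \<rho> else 0) + \<sigma> * uf i * u2" if "i < N" for i
    using cs[OF that]
  proof (elim disjE conjE)
    assume "i = 0" then show ?thesis by (simp add: R_def uf_def ip_al_be)
  next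
    assume "i = 1" then show ?thesis by (simp add: R_def uf_def ip_be_be power2_eq_square)
  next
    assume "i = 2" then show ?thesis by (simp add: R_def uf_def t1al)
  next
    assume h: "3 \<le> i" "i - 3 < N - 3" then show ?thesis by (simp add: Rhi ip_scal ea)
  qed
  have c_t1: "ip n (R i) t1 = (if i = 2 then \<rho> else 0) + \<sigma> * uf i * u3" if "i < N" for i
    using cs[OF that]
  proof (elim disjE conjE)
    assume "i = 0" then show ?thesis by (simp add: R_def uf_def ip_al_t1[OF a])
  next
    assume "i = 1" then show ?thesis by (simp add: R_def uf_def ip_be_t1[OF a])
  next
    assume "i = 2" then show ?thesis by (simp add: R_def uf_def ip_t1_t1[OF a] power2_eq_square)
  next
    assume h: "3 \<le> i" "i - 3 < N - 3" then show ?thesis by (simp add: Rhi ip_scal et)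
  qed
  have sc: "ip n f (\<lambda>l. sqrt \<rho> * e k l) = sqrt \<rho> * ip n (e k) f" for f k
    unfolding ip_def by (simp add: sum_distrib_left mult_ac)
  have c_e: "ip n (R i) (\<lambda>l. sqrt \<rho> * e k l) = (if i = k + 3 then \<rho> else 0)" if "i < N" "k < N - 3" for i k
    using cs[OF that(1)]
  proof (elim disjE conjE)
    assume "i = 0" then show ?thesis
      using ea[OF that(2)] by (simp add: R_def sc)
  next
    assume "i = 1" then show ?thesis
      using ea[OF that(2)] by (simp add: R_def sc)
  next
    assume "i = 2" then show ?thesis
      using et[OF that(2)] by (simp add: R_def sc)
  next
    assume h: "3 \<le> i" "i - 3 < N - 3"
    have "ip n (R i) (\<lambda>l. sqrt \<rho> * e k l) = sqrt \<rho> * (sqrt \<rho> * ip n (e (i - 3)) (e k))"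
      using h ip_comm[of n "e k" "e (i - 3)"] by (simp add: Rhi ip_scal sc)
    also have "\<dots> = (if i = k + 3 then \<rho> else 0)"
      using ee[OF h(2) that(2)] h rr by auto
    finally show ?thesis .
  qed
  have ipR: "ip n (R i) (R j) = (if i = j then \<rho> else 0) + \<sigma> * uf i * uf j" if "i < N" "j < N" for i j
    using cs[OF that(2)]
  proof (elim disjE conjE)
    assume "j = 0" then show ?thesis using c_al[OF that(1)] by (simp add: R_def uf_def)
  next
    assume "j = 1" then show ?thesis using c_be[OF that(1)] by (simp add: R_def uf_def)
  next
    assume "j = 2" then show ?thesis using c_t1[OF that(1)] by (simp add: R_def uf_def)
  next
    assume h: "3 \<le> j" "j - 3 < N - 3"
    then show ?thesis using c_e[OF that(1) h(2)] by (simp add: Rhi)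
  qed
  have c_one: "ip n (R i) onev = cc * uf i" if "i < N" for i
    using cs[OF that]
  proof (elim disjE conjE)
    assume "i = 0" then show ?thesis by (simp add: R_def uf_def ip_al_one)
  next
    assume "i = 1" then show ?thesis by (simp add: R_def uf_def ip_be_one)
  next
    assume "i = 2" then show ?thesis
      using ip_one_t1[OF a] ip_comm[of n onev t1] by (simp add: R_def uf_def)
  next
    assume h: "3 \<le> i" "i - 3 < N - 3" then show ?thesis by (simp add: Rhi ip_scal ea)
  qed
  have "is_lift n z \<gamma> N (mat N n (\<lambda>(i,l). R i l))"
  proof (rule lift_intro)
    show "2 \<le> N" using N by simp
    show "\<forall>l<n. R 0 l = Re (z l)" "\<forall>l<n. R 1 l = Im (z l)" by (simp_all add: R_def al_def be_def)
    have "(\<Sum>i<N. uf i * uf i) = uf 0 * uf 0 + uf 1 * uf 1 + uf 2 * uf 2"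
      by (rule sum_upto3) (use N in \<open>auto simp: uf_def\<close>)
    also have "\<dots> = 1" using u3_sq by (simp add: uf_def)
    finally show "(\<Sum>i<N. uf i * uf i) = 1" .
    show "\<rho> > 0" "\<rho> + \<sigma> > 0" "\<gamma> = \<sigma> / (\<sigma> + \<rho>)" using rho_pos sr_pos gam by auto
    show "\<forall>i<N. \<forall>j<N. (\<Sum>l<n. R i l * R j l) = (if i = j then \<rho> else 0) + \<sigma> * uf i * uf j"
      using ipR unfolding ip_def by blast
    show "\<forall>i<N. (\<Sum>l<n. R i l) = sqrt (real n * (\<sigma> + \<rho>)) * uf i"
      using c_one unfolding ip_def onev_def cc_def by simp
  qed
  then show ?thesis by blast
qed

lemma exists_lift_deg:
  assumes N: "3 \<le> N" "N \<le> n" and a: "ss = 1"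
  shows "\<exists>W. is_lift n z \<gamma> N W"
proof -
  define vd where "vd = (\<lambda>l. u2 * al l - u1 * be l)"
  have len: "N - 2 + length [onev, vd] \<le> n" using N by simp
  obtain e where e1: "\<forall>i<N-2. \<forall>j<N-2. (\<Sum>l<n. e i l * e j l) = (if i = j then 1 else 0)"
    and e2: "\<forall>i<N-2. \<forall>v\<in>set [onev, vd]. (\<Sum>l<n. e i l * v l) = 0"
    using orthonormal_exists[OF len] by blast
  have ee: "ip n (e i) (e j) = (if i = j then 1 else 0)" if "i < N-2" "j < N-2" for i j
    using e1 that unfolding ip_def by blast
  have e_one: "ip n (e i) onev = 0" and e_vd: "ip n (e i) vd = 0" if "i < N-2" for i
    using e2 that unfolding ip_def by auto
  have w0: "wv l = 0" if "l < n" for l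
    using ip_zero_imp[of n wv l] ip_wv a that by simp
  have al_dec: "al l = (u1 * kk) * onev l + u2 * vd l" if "l < n" for l
  proof -
    have h: "u1 * al l + u2 * be l = kk" using w0[OF that] unfolding wv_def onev_def by simp
    have "u1 * (u1 * al l + u2 * be l) + u2 * vd l = (u1 * u1 + u2 * u2) * al l"
      unfolding vd_def by (simp add: ring_distribs mult_ac)
    moreover have "u1 * u1 + u2 * u2 = 1" using a unfolding ss_def by (simp add: power2_eq_square)
    ultimately show ?thesis using h unfolding onev_def by simp
  qed
  have be_dec: "be l = (u2 * kk) * onev l + (- u1) * vd l" if "l < n" for l
  proof -
    have h: "u1 * al l + u2 * be l = kk" using w0[OF that] unfolding wv_def onev_def by simp
    have "u2 * (u1 * al l + u2 * be l) - u1 * vd l = (u1 * u1 + u2 * u2) * be l"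
      unfolding vd_def by (simp add: ring_distribs mult_ac)
    moreover have "u1 * u1 + u2 * u2 = 1" using a unfolding ss_def by (simp add: power2_eq_square)
    ultimately show ?thesis using h unfolding onev_def by simp
  qed
  have ea: "ip n (e i) al = 0" "ip n (e i) be = 0" if "i < N-2" for i
  proof -
    have "ip n (e i) al = ip n (e i) (\<lambda>l. (u1 * kk) * onev l + u2 * vd l)"
      by (rule ip_cong) (rule al_dec)
    also have "\<dots> = (u1 * kk) * ip n (e i) onev + u2 * ip n (e i) vd"
      by (subst ip_comm, subst ip_lin2, simp add: ip_comm)
    finally show "ip n (e i) al = 0" using e_one[OF that] e_vd[OF that] by simp
    have "ip n (e i) be = ip n (e i) (\<lambda>l. (u2 * kk) * onev l + (- u1) * vd l)"
      by (rule ip_cong) (rule be_dec)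
    also have "\<dots> = (u2 * kk) * ip n (e i) onev + (- u1) * ip n (e i) vd"
      by (subst ip_comm, subst ip_lin2, simp add: ip_comm)
    finally show "ip n (e i) be = 0" using e_one[OF that] e_vd[OF that] by simp
  qed
  define R where "R = (\<lambda>i. if i = 0 then al else if i = 1 then be
                        else (\<lambda>l. sqrt \<rho> * e (i - 2) l))"
  define uf where "uf = (\<lambda>i::nat. if i = 0 then u1 else if i = 1 then u2 else 0)"
  have rr: "sqrt \<rho> * sqrt \<rho> = \<rho>" using rho_pos by simp
  have cs: "i = 0 \<or> i = 1 \<or> (2 \<le> i \<and> i - 2 < N - 2)" if "i < N" for i
    using that by auto
  have Rhi: "R i = (\<lambda>l. sqrt \<rho> * e (i - 2) l)" "uf i = 0" if "2 \<le> i" for i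
    using that unfolding R_def uf_def by auto
  have c_al: "ip n (R i) al = (if i = 0 then \<rho> else 0) + \<sigma> * uf i * u1" if "i < N" for i
    using cs[OF that]
  proof (elim disjE conjE)
    assume "i = 0" then show ?thesis by (simp add: R_def uf_def ip_al_al power2_eq_square)
  next
    assume "i = 1" then show ?thesis by (simp add: R_def uf_def ip_be_al)
  next
    assume h: "2 \<le> i" "i - 2 < N - 2" then show ?thesis by (simp add: Rhi ip_scal ea)
  qed
  have c_be: "ip n (R i) be = (if i = 1 then \<rho> else 0) + \<sigma> * uf i * u2" if "i < N" for i
    using cs[OF that]
  proof (elim disjE conjE)
    assume "i = 0" then show ?thesis by (simp add: R_def uf_def ip_al_be)
  next
    assume "i = 1" then show ?thesis by (simp add: R_def uf_def ip_be_be power2_eq_square)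
  next
    assume h: "2 \<le> i" "i - 2 < N - 2" then show ?thesis by (simp add: Rhi ip_scal ea)
  qed
  have sc: "ip n f (\<lambda>l. sqrt \<rho> * e k l) = sqrt \<rho> * ip n (e k) f" for f k
    unfolding ip_def by (simp add: sum_distrib_left mult_ac)
  have c_e: "ip n (R i) (\<lambda>l. sqrt \<rho> * e k l) = (if i = k + 2 then \<rho> else 0)" if "i < N" "k < N - 2" for i k
    using cs[OF that(1)]
  proof (elim disjE conjE)
    assume "i = 0" then show ?thesis
      using ea[OF that(2)] by (simp add: R_def sc)
  next
    assume "i = 1" then show ?thesis
      using ea[OF that(2)] by (simp add: R_def sc)
  next
    assume h: "2 \<le> i" "i - 2 < N - 2"
    have "ip n (R i) (\<lambda>l. sqrt \<rho> * e k l) = sqrt \<rho> * (sqrt \<rho> * ip n (e (i - 2)) (e k))"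
      using h ip_comm[of n "e k" "e (i - 2)"] by (simp add: Rhi ip_scal sc)
    also have "\<dots> = (if i = k + 2 then \<rho> else 0)"
      using ee[OF h(2) that(2)] h rr by auto
    finally show ?thesis .
  qed
  have ipR: "ip n (R i) (R j) = (if i = j then \<rho> else 0) + \<sigma> * uf i * uf j" if "i < N" "j < N" for i j
    using cs[OF that(2)]
  proof (elim disjE conjE)
    assume "j = 0" then show ?thesis using c_al[OF that(1)] by (simp add: R_def uf_def)
  next
    assume "j = 1" then show ?thesis using c_be[OF that(1)] by (simp add: R_def uf_def)
  next
    assume h: "2 \<le> j" "j - 2 < N - 2"
    have jj: "Suc (Suc (j - 2)) = j" using h by simp
    show ?thesis using c_e[OF that(1) h(2)] h by (simp add: Rhi jj)
  qed
  have c_one: "ip n (R i) onev = cc * uf i" if "i < N" for i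
    using cs[OF that]
  proof (elim disjE conjE)
    assume "i = 0" then show ?thesis by (simp add: R_def uf_def ip_al_one)
  next
    assume "i = 1" then show ?thesis by (simp add: R_def uf_def ip_be_one)
  next
    assume h: "2 \<le> i" "i - 2 < N - 2" then show ?thesis by (simp add: Rhi ip_scal e_one)
  qed
  have "is_lift n z \<gamma> N (mat N n (\<lambda>(i,l). R i l))"
  proof (rule lift_intro)
    show "2 \<le> N" using N by simp
    show "\<forall>l<n. R 0 l = Re (z l)" "\<forall>l<n. R 1 l = Im (z l)" by (simp_all add: R_def al_def be_def)
    have "(\<Sum>i<N. uf i * uf i) = uf 0 * uf 0 + uf 1 * uf 1"
      by (rule sum_upto2) (use N in \<open>auto simp: uf_def\<close>)
    also have "\<dots> = 1" using a unfolding ss_def by (simp add: uf_def power2_eq_square)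
    finally show "(\<Sum>i<N. uf i * uf i) = 1" .
    show "\<rho> > 0" "\<rho> + \<sigma> > 0" "\<gamma> = \<sigma> / (\<sigma> + \<rho>)" using rho_pos sr_pos gam by auto
    show "\<forall>i<N. \<forall>j<N. (\<Sum>l<n. R i l * R j l) = (if i = j then \<rho> else 0) + \<sigma> * uf i * uf j"
      using ipR unfolding ip_def by blast
    show "\<forall>i<N. (\<Sum>l<n. R i l) = sqrt (real n * (\<sigma> + \<rho>)) * uf i"
      using c_one unfolding ip_def onev_def cc_def by simp
  qed
  then show ?thesis by blast
qed

lemma exists_full_lift:
  assumes N: "3 \<le> N" "N \<le> n"
  shows "\<exists>W. is_full_lift n z \<gamma> N W"
proof -
  have "\<exists>W. is_lift n z \<gamma> N W"
  proof (cases "ss = 1")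
    case True then show ?thesis using exists_lift_deg[OF N] by blast
  next
    case False then have "ss < 1" using ss_le1 by simp
    then show ?thesis using exists_lift_nondeg[OF N] by blast
  qed
  then show ?thesis unfolding is_full_lift_def using lift_full_rank by blast
qed

end


lemma rank_right_inv:
  fixes W :: "real mat"
  assumes W: "W \<in> carrier_mat N n" and V: "V \<in> carrier_mat n N" and WV: "W * V = 1\<^sub>m N"
  shows "vec_space.rank N W = N"
proof -
  interpret vec_space "TYPE(real)" N .
  have surj: "\<exists>x\<in>carrier_vec n. W *\<^sub>v x = y" if y: "y \<in> carrier_vec N" for y
  proof
    show "V *\<^sub>v y \<in> carrier_vec n" using V y by (intro mult_mat_vec_carrier) auto
    have "W *\<^sub>v (V *\<^sub>v y) = (W * V) *\<^sub>v y" using W V y by (simp add: assoc_mult_mat_vec)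
    also have "\<dots> = y" using WV y by simp
    finally show "W *\<^sub>v (V *\<^sub>v y) = y" .
  qed
  have cW: "col_space W = carrier_vec N"
    unfolding col_space_eq[OF W] using W surj by auto
  have one: "(1\<^sub>m N :: real mat) \<in> carrier_mat N N" by simp
  have c1: "col_space (1\<^sub>m N :: real mat) = carrier_vec N"
    unfolding col_space_eq[OF one] by (auto intro!: bexI[of _ "y" for y])
  have "rank W = rank (1\<^sub>m N :: real mat)"
    unfolding rank_def using cW c1 unfolding col_space_def by simp
  also have "\<dots> = N" using det_rank_iff[OF one] by simp
  finally show ?thesis .
qed

lemma alg_kernel:
  fixes v0 v1 v2 u1 u2 cc m \<rho> \<sigma> :: real
  assumes r: "\<rho> > 0" and m: "m > 0" and c: "cc * cc = m * (\<sigma> + \<rho>)" and s: "u1\<^sup>2 + u2\<^sup>2 < 1"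
    and E0: "(\<rho> + \<sigma> * u1\<^sup>2) * v0 + \<sigma> * u1 * u2 * v1 + cc * u1 * v2 = 0"
    and E1: "\<sigma> * u1 * u2 * v0 + (\<rho> + \<sigma> * u2\<^sup>2) * v1 + cc * u2 * v2 = 0"
    and E2: "cc * u1 * v0 + cc * u2 * v1 + m * v2 = 0"
  shows "v0 = 0 \<and> v1 = 0 \<and> v2 = 0"
proof -
  define p where "p = u1 * v0 + u2 * v1"
  have mv2: "m * v2 = - cc * p" using E2 unfolding p_def by (simp add: algebra_simps)
  have "m * ((\<rho> + \<sigma> * u1\<^sup>2) * v0 + \<sigma> * u1 * u2 * v1 + cc * u1 * v2) = 0"
    using E0 by simp
  then have "m * ((\<rho> + \<sigma> * u1\<^sup>2) * v0 + \<sigma> * u1 * u2 * v1) + cc * u1 * (m * v2) = 0"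
    by (simp add: ring_distribs mult_ac)
  then have "m * ((\<rho> + \<sigma> * u1\<^sup>2) * v0 + \<sigma> * u1 * u2 * v1) - u1 * p * (cc * cc) = 0"
    unfolding mv2 by (simp add: mult_ac)
  then have "m * ((\<rho> + \<sigma> * u1\<^sup>2) * v0 + \<sigma> * u1 * u2 * v1 - u1 * p * (\<sigma> + \<rho>)) = 0"
    unfolding c by (simp add: ring_distribs mult_ac)
  then have "(\<rho> + \<sigma> * u1\<^sup>2) * v0 + \<sigma> * u1 * u2 * v1 - u1 * p * (\<sigma> + \<rho>) = 0" using m by simp
  then have "\<rho> * (v0 - u1 * p) = 0" unfolding p_def by (simp add: ring_distribs mult_ac power2_eq_square)
  then have h0: "v0 = u1 * p" using r by simp
  have "m * (\<sigma> * u1 * u2 * v0 + (\<rho> + \<sigma> * u2\<^sup>2) * v1 + cc * u2 * v2) = 0"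
    using E1 by simp
  then have "m * (\<sigma> * u1 * u2 * v0 + (\<rho> + \<sigma> * u2\<^sup>2) * v1) + cc * u2 * (m * v2) = 0"
    by (simp add: ring_distribs mult_ac)
  then have "m * (\<sigma> * u1 * u2 * v0 + (\<rho> + \<sigma> * u2\<^sup>2) * v1) - u2 * p * (cc * cc) = 0"
    unfolding mv2 by (simp add: mult_ac)
  then have "m * (\<sigma> * u1 * u2 * v0 + (\<rho> + \<sigma> * u2\<^sup>2) * v1 - u2 * p * (\<sigma> + \<rho>)) = 0"
    unfolding c by (simp add: ring_distribs mult_ac)
  then have "\<sigma> * u1 * u2 * v0 + (\<rho> + \<sigma> * u2\<^sup>2) * v1 - u2 * p * (\<sigma> + \<rho>) = 0" using m by simp
  then have "\<rho> * (v1 - u2 * p) = 0" unfolding p_def by (simp add: ring_distribs mult_ac power2_eq_square)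
  then have h1: "v1 = u2 * p" using r by simp
  have "p = (u1\<^sup>2 + u2\<^sup>2) * p" unfolding p_def using h0 h1
    by (metis (no_types, lifting) distrib_right mult.assoc power2_eq_square p_def)
  then have "(1 - (u1\<^sup>2 + u2\<^sup>2)) * p = 0" by (simp add: algebra_simps)
  then have "p = 0" using s by simp
  then show ?thesis using h0 h1 mv2 m by simp
qed

context ctx begin

definition "rr = (\<lambda>i::nat. [al, be, onev] ! i)"
definition "A0 = mat_of_rows n [vec n al, vec n be, vec n onev]"

lemma A0_carrier: "A0 \<in> carrier_mat 3 n" unfolding A0_def carrier_mat_def by (simp add: numeral_3_eq_3)

lemma A0_index: "i < 3 \<Longrightarrow> l < n \<Longrightarrow> A0 $$ (i, l) = rr i l"
  unfolding A0_def rr_def by (subst mat_of_rows_index) (auto simp: less_Suc_eq numeral_3_eq_3 nth_Cons')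

lemma AAT: "A0 * A0\<^sup>T = mat 3 3 (\<lambda>(i,j). ip n (rr i) (rr j))"
proof (rule eq_matI)
  fix i j assume "i < dim_row (mat 3 3 (\<lambda>(i,j). ip n (rr i) (rr j)))" "j < dim_col (mat 3 3 (\<lambda>(i,j). ip n (rr i) (rr j)))"
  then have ij: "i < 3" "j < 3" by auto
  have "(A0 * A0\<^sup>T) $$ (i, j) = (\<Sum>l<n. A0 $$ (i, l) * A0 $$ (j, l))"
    using ij A0_carrier by (simp add: scalar_prod_def atLeast0LessThan)
  also have "\<dots> = ip n (rr i) (rr j)" unfolding ip_def using ij by (intro sum.cong) (auto simp: A0_index)
  finally show "(A0 * A0\<^sup>T) $$ (i, j) = mat 3 3 (\<lambda>(i,j). ip n (rr i) (rr j)) $$ (i, j)" using ij by simp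
qed (use A0_carrier in auto)

lemma A0_mult: "w \<in> carrier_vec n \<Longrightarrow> i < 3 \<Longrightarrow> (A0 *\<^sub>v w) $ i = ip n (rr i) (\<lambda>l. w $ l)"
  using A0_carrier unfolding ip_def
  by (simp add: scalar_prod_def atLeast0LessThan A0_index)

lemma A0T_mult: "y \<in> carrier_vec 3 \<Longrightarrow> l < n \<Longrightarrow> (A0\<^sup>T *\<^sub>v y) $ l = y $ 0 * al l + y $ 1 * be l + y $ 2 * onev l"
proof -
  assume y: "y \<in> carrier_vec 3" and l: "l < n"
  have "(A0\<^sup>T *\<^sub>v y) $ l = (\<Sum>i<3. A0 $$ (i, l) * y $ i)"
    using A0_carrier y l by (simp add: scalar_prod_def atLeast0LessThan)
  also have "\<dots> = (\<Sum>i<3. rr i l * y $ i)" using l by (intro sum.cong) (auto simp: A0_index)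
  also have "\<dots> = y $ 0 * al l + y $ 1 * be l + y $ 2 * onev l"
    by (simp add: numeral_3_eq_3 numeral_2_eq_2 lessThan_Suc rr_def mult.commute)
  finally show ?thesis .
qed

lemma AAT_carrier: "A0 * A0\<^sup>T \<in> carrier_mat 3 3" using A0_carrier by simp

lemma AAT_inj:
  assumes a: "ss < 1" and v: "v \<in> carrier_vec 3" and h: "(A0 * A0\<^sup>T) *\<^sub>v v = 0\<^sub>v 3"
  shows "v = 0\<^sub>v 3"
proof -
  have E: "(\<Sum>j<3. ip n (rr i) (rr j) * v $ j) = 0" if "i < 3" for i
  proof -
    have "((A0 * A0\<^sup>T) *\<^sub>v v) $ i = 0" using h that by simp
    moreover have "((A0 * A0\<^sup>T) *\<^sub>v v) $ i = (\<Sum>j<3. ip n (rr i) (rr j) * v $ j)"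
      unfolding AAT using that v by (simp add: scalar_prod_def atLeast0LessThan)
    ultimately show ?thesis by simp
  qed
  have s3: "(\<Sum>j<(3::nat). f j) = f 0 + f 1 + (f 2 :: real)" for f :: "nat \<Rightarrow> real"
    by (simp add: numeral_3_eq_3 numeral_2_eq_2 lessThan_Suc)
  have E0: "(\<rho> + \<sigma> * u1\<^sup>2) * v $ 0 + \<sigma> * u1 * u2 * v $ 1 + cc * u1 * v $ 2 = 0"
    using E[of 0] unfolding s3 by (simp add: rr_def ip_basic)
  have E1: "\<sigma> * u1 * u2 * v $ 0 + (\<rho> + \<sigma> * u2\<^sup>2) * v $ 1 + cc * u2 * v $ 2 = 0"
    using E[of 1] unfolding s3 by (simp add: rr_def ip_basic)
  have E2: "cc * u1 * v $ 0 + cc * u2 * v $ 1 + real n * v $ 2 = 0"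
    using E[of 2] unfolding s3 by (simp add: rr_def ip_basic)
  have cc2: "cc * cc = real n * (\<sigma> + \<rho>)" using cc_sq by (simp add: power2_eq_square)
  have "v $ 0 = 0 \<and> v $ 1 = 0 \<and> v $ 2 = 0"
    by (rule alg_kernel[OF rho_pos npos cc2 _ E0 E1 E2]) (use a in \<open>simp add: ss_def\<close>)
  then show ?thesis using v
    by (intro eq_vecI) (auto simp: less_Suc_eq numeral_3_eq_3 numeral_2_eq_2)
qed

lemma AAT_det: "ss < 1 \<Longrightarrow> det (A0 * A0\<^sup>T) \<noteq> 0"
  using det_0_iff_vec_prod_zero_field[OF AAT_carrier] AAT_inj by blast

lemma AAT_inverse:
  assumes a: "ss < 1"
  obtains B where "mat_inverse (A0 * A0\<^sup>T) = Some B" "A0 * A0\<^sup>T * B = 1\<^sub>m 3"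
    "B * (A0 * A0\<^sup>T) = 1\<^sub>m 3" "B \<in> carrier_mat 3 3"
proof -
  have U: "A0 * A0\<^sup>T \<in> Units (ring_mat TYPE(real) 3 ())"
    by (rule det_non_zero_imp_unit[OF AAT_carrier AAT_det[OF a]])
  show ?thesis
  proof (cases "mat_inverse (A0 * A0\<^sup>T)")
    case None
    then show ?thesis using mat_inverse(1)[OF AAT_carrier None, where b="()"] U by simp
  next
    case (Some B)
    then show ?thesis using mat_inverse(2)[OF AAT_carrier Some] that by blast
  qed
qed

definition "bb = u3 \<cdot>\<^sub>v vec_of_list [\<sigma> * u1, \<sigma> * u2, cc]"

lemma t_eq:
  assumes a: "ss < 1"
  shows "A0\<^sup>T *\<^sub>v (the (mat_inverse (A0 * A0\<^sup>T)) *\<^sub>v bb) = vec n t1"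
proof -
  obtain B where B: "mat_inverse (A0 * A0\<^sup>T) = Some B" "A0 * A0\<^sup>T * B = 1\<^sub>m 3"
    "B * (A0 * A0\<^sup>T) = 1\<^sub>m 3" "B \<in> carrier_mat 3 3"
    using AAT_inverse[OF a] by blast
  define y1 where "y1 = vec_of_list [- u1 / u3, - u2 / u3, cc / (real n * u3)]"
  have y1c: "y1 \<in> carrier_vec 3" unfolding y1_def carrier_vec_def by (simp del: vec_of_list_Cons)
  have hT: "A0\<^sup>T *\<^sub>v y1 = vec n t1"
  proof (rule eq_vecI)
    fix l assume "l < dim_vec (vec n t1)"
    then have l: "l < n" by simp
    show "(A0\<^sup>T *\<^sub>v y1) $ l = vec n t1 $ l"
      unfolding A0T_mult[OF y1c l] using l unfolding y1_def t1_def
      by (simp add: vec_of_list_index del: vec_of_list_Cons)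
  qed (use A0_carrier in simp)
  have t1c: "vec n t1 \<in> carrier_vec n" by simp
  have hA: "A0 *\<^sub>v vec n t1 = bb"
  proof (rule eq_vecI)
    show "dim_vec (A0 *\<^sub>v vec n t1) = dim_vec bb" using A0_carrier unfolding bb_def by (simp del: vec_of_list_Cons)
    fix i assume "i < dim_vec bb"
    then have i: "i < 3" unfolding bb_def by (simp del: vec_of_list_Cons)
    have "(A0 *\<^sub>v vec n t1) $ i = ip n (rr i) t1"
      unfolding A0_mult[OF t1c i] by (rule ip_cong) simp
    also have "\<dots> = bb $ i"
    proof -
      have "i = 0 \<or> i = 1 \<or> i = 2" using i by auto
      then show ?thesis
        by (elim disjE) (simp_all add: rr_def bb_def vec_of_list_index ip_al_t1[OF a] ip_be_t1[OF a] ip_one_t1[OF a] mult_ac del: vec_of_list_Cons)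
    qed
    finally show "(A0 *\<^sub>v vec n t1) $ i = bb $ i" .
  qed
  have "bb = (A0 * A0\<^sup>T) *\<^sub>v y1"
    using A0_carrier y1c by (simp add: assoc_mult_mat_vec hT hA)
  then have "B *\<^sub>v bb = B *\<^sub>v ((A0 * A0\<^sup>T) *\<^sub>v y1)" by simp
  also have "\<dots> = (B * (A0 * A0\<^sup>T)) *\<^sub>v y1"
    by (rule assoc_mult_mat_vec[symmetric, OF B(4) AAT_carrier y1c])
  also have "\<dots> = y1" using B(3) y1c by simp
  finally show ?thesis using B(1) hT by simp
qed

lemma rank_A0:
  assumes a: "ss < 1"
  shows "vec_space.rank 3 A0 = 3"
proof -
  obtain B where B: "mat_inverse (A0 * A0\<^sup>T) = Some B" "A0 * A0\<^sup>T * B = 1\<^sub>m 3"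
    "B * (A0 * A0\<^sup>T) = 1\<^sub>m 3" "B \<in> carrier_mat 3 3"
    using AAT_inverse[OF a] by blast
  have "A0 * (A0\<^sup>T * B) = (A0 * A0\<^sup>T) * B"
    by (rule assoc_mult_mat[symmetric]) (use B(4) A0_carrier in auto)
  then have "A0 * (A0\<^sup>T * B) = 1\<^sub>m 3" using B(2) by simp
  moreover have "A0\<^sup>T * B \<in> carrier_mat n 3" using B(4) A0_carrier by simp
  ultimately show ?thesis using rank_right_inv[OF A0_carrier] by blast
qed

end


context ctx begin

lemma lift_of_sign:
  assumes a: "ss < 1" and s: "s = 1 \<or> s = -1"
  shows "is_lift n z \<gamma> 3 (mat_of_rows n [vec n al, vec n be, s \<cdot>\<^sub>v vec n t1])"
proof -
  define R where "R = (\<lambda>i::nat. [al, be, (\<lambda>l. s * t1 l)] ! i)"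
  define uf where "uf = (\<lambda>i::nat. [u1, u2, s * u3] ! i)"
  have ss1: "s * s = 1" using s by auto
  have W: "mat_of_rows n [vec n al, vec n be, s \<cdot>\<^sub>v vec n t1] = mat 3 n (\<lambda>(i,l). R i l)"
  proof (rule eq_matI)
    fix i l assume "i < dim_row (mat 3 n (\<lambda>(i,l). R i l))" "l < dim_col (mat 3 n (\<lambda>(i,l). R i l))"
    then have il: "i < 3" "l < n" by auto
    then have "i = 0 \<or> i = 1 \<or> i = 2" by auto
    then show "mat_of_rows n [vec n al, vec n be, s \<cdot>\<^sub>v vec n t1] $$ (i, l) = mat 3 n (\<lambda>(i,l). R i l) $$ (i, l)"
      using il by (elim disjE) (simp_all add: mat_of_rows_index R_def)
  qed (simp_all add: numeral_3_eq_3)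
  have t1al: "ip n t1 al = \<sigma> * u1 * u3" "ip n t1 be = \<sigma> * u2 * u3" "ip n t1 onev = cc * u3"
    using ip_al_t1[OF a] ip_be_t1[OF a] ip_one_t1[OF a] ip_comm[of n t1 al] ip_comm[of n t1 be]
      ip_comm[of n t1 onev] by simp_all
  have st: "ip n (\<lambda>l. s * t1 l) f = s * ip n t1 f" "ip n f (\<lambda>l. s * t1 l) = s * ip n f t1" for f
    unfolding ip_def by (simp_all add: sum_distrib_left mult_ac)
  have "is_lift n z \<gamma> 3 (mat 3 n (\<lambda>(i,l). R i l))"
  proof (rule lift_intro)
    show "2 \<le> (3::nat)" by simp
    show "\<forall>l<n. R 0 l = Re (z l)" "\<forall>l<n. R 1 l = Im (z l)" by (simp_all add: R_def al_def be_def)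
    have "(\<Sum>i<3. uf i * uf i) = u1 * u1 + u2 * u2 + s * s * (u3 * u3)"
      by (simp add: numeral_3_eq_3 lessThan_Suc uf_def mult_ac)
    also have "\<dots> = 1" using ss1 u3_sq by simp
    finally show "(\<Sum>i<3. uf i * uf i) = 1" .
    show "\<rho> > 0" "\<rho> + \<sigma> > 0" "\<gamma> = \<sigma> / (\<sigma> + \<rho>)" using rho_pos sr_pos gam by auto
    show "\<forall>i<3. \<forall>j<3. (\<Sum>l<n. R i l * R j l) = (if i = j then \<rho> else 0) + \<sigma> * uf i * uf j"
    proof (intro allI impI)
      fix i j :: nat assume ij: "i < 3" "j < 3"
      then have "i = 0 \<or> i = 1 \<or> i = 2" "j = 0 \<or> j = 1 \<or> j = 2" by auto
      then have "ip n (R i) (R j) = (if i = j then \<rho> else 0) + \<sigma> * uf i * uf j"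
        apply (elim disjE)
        apply (simp_all add: R_def uf_def st ip_basic t1al ip_al_t1[OF a] ip_be_t1[OF a] ip_t1_t1[OF a])
        apply (simp_all add: power2_eq_square mult_ac)
        using ss1 by (simp add: algebra_simps)
      then show "(\<Sum>l<n. R i l * R j l) = (if i = j then \<rho> else 0) + \<sigma> * uf i * uf j"
        unfolding ip_def .
    qed
    show "\<forall>i<3. (\<Sum>l<n. R i l) = sqrt (real n * (\<sigma> + \<rho>)) * uf i"
    proof (intro allI impI)
      fix i :: nat assume "i < 3"
      then have "i = 0 \<or> i = 1 \<or> i = 2" by auto
      then have "ip n (R i) onev = cc * uf i"
        by (elim disjE) (simp_all add: R_def uf_def st ip_basic t1al mult_ac)
      then show "(\<Sum>l<n. R i l) = sqrt (real n * (\<sigma> + \<rho>)) * uf i"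
        unfolding ip_def onev_def cc_def by simp
    qed
  qed
  then show ?thesis unfolding W .
qed

lemma sign_of_lift:
  assumes a: "ss < 1" and L: "is_lift n z \<gamma> 3 W"
  shows "\<exists>s. (s = 1 \<or> s = -1) \<and> W = mat_of_rows n [vec n al, vec n be, s \<cdot>\<^sub>v vec n t1]"
proof -
  obtain uf \<rho>' \<sigma>' where Wm: "W = mat 3 n (\<lambda>(i,l). W $$ (i,l))"
    and r0: "\<forall>l<n. W $$ (0, l) = Re (z l)" and r1: "\<forall>l<n. W $$ (1, l) = Im (z l)"
    and uu: "(\<Sum>i<3. uf i * uf i) = 1" and p: "\<rho>' > 0" "\<rho>' + \<sigma>' > 0" and g: "\<gamma> = \<sigma>' / (\<sigma>' + \<rho>')"
    and G: "\<forall>i<3. \<forall>j<3. (\<Sum>l<n. W $$ (i,l) * W $$ (j,l)) = (if i = j then \<rho>' else 0) + \<sigma>' * uf i * uf j"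
    and S: "\<forall>i<3. (\<Sum>l<n. W $$ (i,l)) = sqrt (real n * (\<sigma>' + \<rho>')) * uf i"
    using lift_elim[OF L] by auto
  define r where "r = (\<lambda>l. W $$ (2, l))"
  define c' where "c' = sqrt (real n * (\<sigma>' + \<rho>'))"
  have c'pos: "c' > 0" unfolding c'_def using p npos by simp
  have c'sq: "c' * c' = real n * (\<sigma>' + \<rho>')" unfolding c'_def using p npos by simp
  have W0: "ip n (\<lambda>l. W $$ (0, l)) f = ip n al f" and W1: "ip n (\<lambda>l. W $$ (1, l)) f = ip n be f" for f
    unfolding ip_def al_def be_def using r0 r1 by (auto intro!: sum.cong)
  have Gip: "ip n (\<lambda>l. W $$ (i, l)) (\<lambda>l. W $$ (j, l)) = (if i = j then \<rho>' else 0) + \<sigma>' * uf i * uf j"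
    if "i < 3" "j < 3" for i j using G that unfolding ip_def by blast
  have Sip: "ip n (\<lambda>l. W $$ (i, l)) onev = c' * uf i" if "i < 3" for i
    using S that unfolding ip_def onev_def c'_def by simp
  have PaW: "Pa = \<rho>' + \<sigma>' * uf 0 * uf 0" using Gip[of 0 0] W0[of al] W0[of "\<lambda>l. W $$ (0, l)"]
      ip_comm[of n al "\<lambda>l. W $$ (0, l)"]
    unfolding Pa_def by simp
  have SaW: "Sa = c' * uf 0" using Sip[of 0] W0[of onev] Sa_ip by simp
  have SbW: "Sb = c' * uf 1" using Sip[of 1] W1[of onev] Sb_ip by simp
  have sig': "\<sigma>' * uf 0 * uf 0 = \<gamma> * Sa\<^sup>2 / real n"
  proof -
    have "\<gamma> * Sa\<^sup>2 / real n = \<sigma>' / (\<sigma>' + \<rho>') * (c' * c') * (uf 0 * uf 0) / real n"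
      unfolding g SaW by (simp add: power2_eq_square mult_ac)
    also have "\<dots> = \<sigma>' / (\<sigma>' + \<rho>') * (real n * (\<sigma>' + \<rho>')) * (uf 0 * uf 0) / real n"
      unfolding c'sq ..
    also have "\<sigma>' / (\<sigma>' + \<rho>') * (real n * (\<sigma>' + \<rho>')) = \<sigma>' * real n"
    proof -
      have nz: "\<sigma>' + \<rho>' \<noteq> 0" using p by simp
      then show ?thesis by simp
    qed
    also have "\<sigma>' * real n * (uf 0 * uf 0) / real n = \<sigma>' * uf 0 * uf 0" using npos by simp
    finally show ?thesis by simp
  qed
  have rho': "\<rho>' = \<rho>" using Pa_eq PaW sig' by simp
  have sigma': "\<sigma>' = \<sigma>"
  proof -
    have "\<gamma> * (\<sigma>' + \<rho>') = \<sigma>'" using g p by simp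
    then have "\<sigma>' * (1 - \<gamma>) = \<gamma> * \<rho>" using rho' by (simp add: algebra_simps)
    then show ?thesis unfolding sigma_def using g1 by (simp add: field_simps)
  qed
  have c'cc: "c' = cc" unfolding c'_def cc_def rho' sigma' ..
  have uf0: "uf 0 = u1" unfolding u1_def SaW c'cc using cc_pos by simp
  have uf1: "uf 1 = u2" unfolding u2_def SbW c'cc using cc_pos by simp
  have "uf 0 * uf 0 + uf 1 * uf 1 + uf 2 * uf 2 = 1"
    using uu by (simp add: numeral_3_eq_3 numeral_2_eq_2 lessThan_Suc)
  then have uf2sq: "uf 2 * uf 2 = u3 * u3" unfolding uf0 uf1 u3_sq by simp
  have u3p: "u3 > 0" using u3_pos[OF a] .
  define s where "s = uf 2 / u3"
  have uf2: "uf 2 = s * u3" unfolding s_def using u3p by simp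
  have ss1: "s * s = 1" using uf2sq unfolding uf2 using u3p by (simp add: algebra_simps)
  then have sv: "s = 1 \<or> s = -1" by (metis mult_cancel_left1 square_eq_1_iff)
  have r_al: "ip n r al = \<sigma> * u1 * (s * u3)"
    using Gip[of 0 2] W0[of r] ip_comm[of n al r] unfolding r_def rho' sigma' uf0 uf2 by simp
  have r_be: "ip n r be = \<sigma> * u2 * (s * u3)"
    using Gip[of 1 2] W1[of r] ip_comm[of n be r] unfolding r_def rho' sigma' uf1 uf2 by simp
  have r_one: "ip n r onev = cc * (s * u3)"
    using Sip[of 2] unfolding r_def c'cc uf2 by simp
  have r_r: "ip n r r = \<rho> + \<sigma> * u3\<^sup>2"
    using Gip[of 2 2] ss1 unfolding r_def rho' sigma' uf2 by (simp add: power2_eq_square algebra_simps)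
  have r_t1: "ip n r t1 = s * ip n t1 t1"
  proof -
    have "ip n r t1 = ip n t1 r" by (rule ip_comm)
    also have "\<dots> = (- u1 / u3) * ip n al r + (- u2 / u3) * ip n be r + (cc / (real n * u3)) * ip n onev r"
      unfolding t1_def by (rule ip_lin3)
    also have "\<dots> = s * ((- u1 / u3) * ip n al t1 + (- u2 / u3) * ip n be t1 + (cc / (real n * u3)) * ip n onev t1)"
      using r_al r_be r_one ip_comm[of n al r] ip_comm[of n be r] ip_comm[of n onev r]
      unfolding ip_al_t1[OF a] ip_be_t1[OF a] ip_one_t1[OF a] by (simp add: algebra_simps)
    also have "(- u1 / u3) * ip n al t1 + (- u2 / u3) * ip n be t1 + (cc / (real n * u3)) * ip n onev t1 = ip n t1 t1"
      unfolding t1_def by (rule ip_lin3[symmetric])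
    finally show ?thesis .
  qed
  define d where "d = (\<lambda>l. s * r l + (-1) * t1 l)"
  have "ip n d d = s * ip n r d + (-1) * ip n t1 d" unfolding d_def by (rule ip_lin2)
  also have "ip n r d = s * ip n r r + (-1) * ip n r t1"
    unfolding d_def by (subst ip_comm, subst ip_lin2, simp add: ip_comm)
  also have "ip n t1 d = s * ip n t1 r + (-1) * ip n t1 t1"
    unfolding d_def by (subst ip_comm, subst ip_lin2, simp add: ip_comm)
  finally have "ip n d d = s * s * ip n r r - 2 * s * ip n r t1 + ip n t1 t1"
    using ip_comm[of n t1 r] by (simp add: algebra_simps)
  also have "\<dots> = (1 - s * s) * (\<rho> + \<sigma> * u3\<^sup>2)" unfolding r_t1 r_r ip_t1_t1[OF a]
    by (simp add: algebra_simps)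
  also have "\<dots> = 0" using ss1 by simp
  finally have dd: "ip n d d = 0" .
  have rl: "r l = s * t1 l" if "l < n" for l
  proof -
    have "s * r l - t1 l = 0" using ip_zero_imp[OF dd that] unfolding d_def by simp
    then have "s * (s * r l) = s * t1 l" by simp
    then show ?thesis using ss1 by (simp add: mult.assoc[symmetric])
  qed
  have "W = mat_of_rows n [vec n al, vec n be, s \<cdot>\<^sub>v vec n t1]"
  proof (rule eq_matI)
    fix i l assume "i < dim_row (mat_of_rows n [vec n al, vec n be, s \<cdot>\<^sub>v vec n t1])"
      "l < dim_col (mat_of_rows n [vec n al, vec n be, s \<cdot>\<^sub>v vec n t1])"
    then have il: "i < 3" "l < n" by auto
    then have "i = 0 \<or> i = 1 \<or> i = 2" by auto
    then show "W $$ (i, l) = mat_of_rows n [vec n al, vec n be, s \<cdot>\<^sub>v vec n t1] $$ (i, l)"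
      using il r0 r1 rl unfolding r_def
      by (elim disjE) (simp_all add: mat_of_rows_index al_def be_def)
  next
    show "dim_row W = dim_row (mat_of_rows n [vec n al, vec n be, s \<cdot>\<^sub>v vec n t1])"
      by (subst Wm) (simp add: numeral_3_eq_3)
    show "dim_col W = dim_col (mat_of_rows n [vec n al, vec n be, s \<cdot>\<^sub>v vec n t1])"
      by (subst Wm) simp
  qed
  then show ?thesis using sv by blast
qed

end

theorem theorem6p1:
  fixes n :: nat and \<gamma> :: real and z :: "nat \<Rightarrow> complex"
    and \<rho> \<sigma> u1 u2 u3 :: real and A :: "real mat" and b t :: "real vec"
  assumes n3: "n \<ge> 3"
    and g1: "\<gamma> < 1"
    and nz: "\<exists>l<n. z l \<noteq> 0"
    and rel: "complex_of_real (\<gamma> / real n) * (\<Sum>l<n. z l)\<^sup>2 = (\<Sum>l<n. (z l)\<^sup>2)"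
    and rho_def: "\<rho> = (1/2) * (\<Sum>l<n. (cmod (z l))\<^sup>2) - \<gamma> / (2 * real n) * (cmod (\<Sum>l<n. z l))\<^sup>2"
    and sigma_def: "\<sigma> = \<gamma> * \<rho> / (1 - \<gamma>)"
    and u1_def: "u1 = (\<Sum>l<n. Re (z l)) / sqrt (real n * (\<sigma> + \<rho>))"
    and u2_def: "u2 = (\<Sum>l<n. Im (z l)) / sqrt (real n * (\<sigma> + \<rho>))"
    and u3_def: "u3 = sqrt (1 - u1\<^sup>2 - u2\<^sup>2)"
    and A_def: "A = mat_of_rows n [vec n (\<lambda>l. Re (z l)), vec n (\<lambda>l. Im (z l)), vec n (\<lambda>l. 1)]"
    and b_def: "b = u3 \<cdot>\<^sub>v vec_of_list [\<sigma> * u1, \<sigma> * u2, sqrt (real n * (\<sigma> + \<rho>))]"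
    and t_def: "t = A\<^sup>T *\<^sub>v (the (mat_inverse (A * A\<^sup>T)) *\<^sub>v b)"
  shows "(\<forall>N. 3 \<le> N \<and> N \<le> n \<longrightarrow> (\<exists>W. is_full_lift n z \<gamma> N W)) \<and>
         (real n * (\<Sum>l<n. (cmod (z l))\<^sup>2) + (\<gamma> - 2) * (cmod (\<Sum>l<n. z l))\<^sup>2 \<noteq> 0 \<longrightarrow>
            u3 > 0 \<and> vec_space.rank 3 A = 3 \<and>
            (\<forall>W. is_lift n z \<gamma> 3 W \<longleftrightarrow>
               (\<exists>s::real. (s = 1 \<or> s = -1) \<and>
                  W = mat_of_rows n [vec n (\<lambda>l. Re (z l)), vec n (\<lambda>l. Im (z l)), s \<cdot>\<^sub>v t])))"
proof -
  interpret C: ctx n \<gamma> z \<rho> \<sigma>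
    by (unfold_locales) (use n3 g1 nz rel rho_def sigma_def in auto)
  have P1: "\<forall>N. 3 \<le> N \<and> N \<le> n \<longrightarrow> (\<exists>W. is_full_lift n z \<gamma> N W)"
    using C.exists_full_lift by blast
  have eu1: "u1 = C.u1" unfolding u1_def C.u1_def C.Sa_def C.cc_def ..
  have eu2: "u2 = C.u2" unfolding u2_def C.u2_def C.Sb_def C.cc_def ..
  have eu3: "u3 = C.u3" unfolding u3_def C.u3_def eu1 eu2 ..
  have eA: "A = C.A0" unfolding A_def C.A0_def C.al_def C.be_def C.onev_def ..
  have eb: "b = C.bb" unfolding b_def C.bb_def eu1 eu2 eu3 C.cc_def ..
  have P2: "u3 > 0 \<and> vec_space.rank 3 A = 3 \<and>
            (\<forall>W. is_lift n z \<gamma> 3 W \<longleftrightarrow>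
               (\<exists>s::real. (s = 1 \<or> s = -1) \<and>
                  W = mat_of_rows n [vec n (\<lambda>l. Re (z l)), vec n (\<lambda>l. Im (z l)), s \<cdot>\<^sub>v t]))"
    if nd: "real n * (\<Sum>l<n. (cmod (z l))\<^sup>2) + (\<gamma> - 2) * (cmod (\<Sum>l<n. z l))\<^sup>2 \<noteq> 0"
  proof -
    have "C.ss \<noteq> 1" using nd C.expr_eq by auto
    then have a: "C.ss < 1" using C.ss_le1 by simp
    have et: "t = vec n C.t1" unfolding t_def eA eb using C.t_eq[OF a] .
    have ev: "vec n (\<lambda>l. Re (z l)) = vec n C.al" "vec n (\<lambda>l. Im (z l)) = vec n C.be"
      unfolding C.al_def C.be_def by simp_all
    show ?thesis
    proof (intro conjI allI)
      show "u3 > 0" unfolding eu3 using C.u3_pos[OF a] .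
      show "vec_space.rank 3 A = 3" unfolding eA using C.rank_A0[OF a] .
      fix W
      show "is_lift n z \<gamma> 3 W \<longleftrightarrow>
               (\<exists>s::real. (s = 1 \<or> s = -1) \<and>
                  W = mat_of_rows n [vec n (\<lambda>l. Re (z l)), vec n (\<lambda>l. Im (z l)), s \<cdot>\<^sub>v t])"
        unfolding et ev using C.sign_of_lift[OF a] C.lift_of_sign[OF a] by blast
    qed
  qed
  show ?thesis using P1 P2 by blast
qed

end
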